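(* The category $\mathbb S^{\mathrm{m},\mathbb P}_r$ is a traced symmetric monoidal category.
   Context: Notation: $[k]=\{1,\dots,k\}$; $T(X)=X+\mathbb R\times X+\{\exists^*,\forall^*\}$; diagrammatic composition. $\mathbb S^{\mathrm{m},\mathbb P}_r$ (meager semantic category for plays) has natural numbers as objects; an arrow $f:m\to n$ is a function $f:[m]\to T([n])$ satisfying realizability: for all $i\ne j$ in $[m]$, $f(i)\notin[n]$ or $f(j)\notin\{f(i)\}\cup\mathbb R\times\{f(i)\}$. Its hom-sets are ordered pointwise by the least order $\le$ on $T([n])$ with $(r_1,i)\le(r_2,i)$ whenever $r_1\ge r_2$, $\exists^*\le z$ and $z\le\forall^*$ for all $z$. Its operations are: composition of $f:m\to l$, $g:l\to n$: $(f;g)(i)=f(i)$ if $f(i)\in\{\exists^*,\forall^*\}$; $g(j)$ if $f(i)=j\in[l]$; $g(j)$ if $f(i)=(r,j)$ and $g(j)\in\{\exists^*,\forall^*\}$; $(r,k)$ if $f(i)=(r,j)$, $g(j)=k$; $(r+r',k)$ if $f(i)=(r,j)$, $g(j)=(r',k)$. $\mathrm{id}(i)=i$; $\sigma_{m,n}(i)=n+i$ ($i\le m$), $\sigma_{m,n}(m+j)=j$; $(f\oplus g)(i)=f(i)$ ($i\le m$), $(f\oplus g)(m+i)$ is $g(i)$ with its index $j$ (if any) shifted to $n+j$ (for $f:m\to n$). Trace of $f:l+m\to l+n$ at $i\in[m]$: $v_0=l+i$; if $j=0$ or $v_j\in[l]$ then $v_{j+1}=f(v_j)$; if $v_j=(r,k)$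 with $k\in[l]$ then $v_{j+1}=f(k)$; otherwise stop at $v_j$. If finite $(v_0,..,v_K)$ and $S$ is the sum of first components of $v_j\in\mathbb R\times[l+n]$, $1\le j\le K$: value $v_K$ if $v_K\in\{\exists^*,\forall^*\}$; $k$ if $v_K=l+k$ and $v_j\in[l]$ for $1\le j<K$; $(S,k)$ if $v_K=l+k$ and some earlier $v_j\in\mathbb R\times[l]$; $(S,k)$ if $v_K=(r,l+k)$. If infinite, with $w'_1,w'_2,..$ the first components of the (infinitely many) entries in $\mathbb R\times[l]$: $\exists^*$ if $\liminf_N\frac1N\sum_{t\le N}w'_t\ge0$, else $\forall^*$. *)

theory Defs
  imports Complex_Main "HOL-Library.FuncSet" "HOL-Library.Infinite_Set"
    "HOL-Library.Extended_Real" "HOL-Library.Liminf_Limsup"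
begin

section \<open>The set T(X) = X + R x X + {exists*, forall*}, with X = {1..n}\<close>

datatype tval = Idx nat | Wt real nat | ExS | AllS

fun inT :: "nat \<Rightarrow> tval \<Rightarrow> bool" where
  "inT n (Idx k) = (k \<in> {1..n})"
| "inT n (Wt r k) = (k \<in> {1..n})"
| "inT n ExS = True"
| "inT n AllS = True"

text \<open>Arrows m -> n: functions [m] -> T([n]) (extensional: undefined outside [m])
  satisfying realizability.\<close>
definition arr :: "nat \<Rightarrow> nat \<Rightarrow> (nat \<Rightarrow> tval) \<Rightarrow> bool" where
  "arr m n f \<longleftrightarrow>
     (\<forall>i\<in>{1..m}. inT n (f i)) \<and>
     (\<forall>i\<in>{1..m}. \<forall>j\<in>{1..m}. i \<noteq> j \<longrightarrow>
        (case f i of Idx k \<Rightarrow> f j \<noteq> Idx k \<and> (\<forall>r. f j \<noteq> Wt r k) | _ \<Rightarrow> True)) \<and>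
     f \<in> extensional {1..m}"

text \<open>Composition (diagrammatic) of f : m -> l and g : l -> n.\<close>
definition comp :: "nat \<Rightarrow> nat \<Rightarrow> nat \<Rightarrow> (nat \<Rightarrow> tval) \<Rightarrow> (nat \<Rightarrow> tval) \<Rightarrow> (nat \<Rightarrow> tval)" where
  "comp m l n f g = restrict (\<lambda>i. case f i of
       ExS \<Rightarrow> ExS
     | AllS \<Rightarrow> AllS
     | Idx j \<Rightarrow> g j
     | Wt r j \<Rightarrow> (case g j of ExS \<Rightarrow> ExS | AllS \<Rightarrow> AllS
                   | Idx k \<Rightarrow> Wt r k | Wt r' k \<Rightarrow> Wt (r + r') k)) {1..m}"

definition ident :: "nat \<Rightarrow> (nat \<Rightarrow> tval)" where
  "ident m = restrict Idx {1..m}"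

definition sym :: "nat \<Rightarrow> nat \<Rightarrow> (nat \<Rightarrow> tval)" where
  "sym m n = restrict (\<lambda>i. if i \<le> m then Idx (n + i) else Idx (i - m)) {1..m+n}"

fun shift :: "nat \<Rightarrow> tval \<Rightarrow> tval" where
  "shift n (Idx j) = Idx (n + j)"
| "shift n (Wt r j) = Wt r (n + j)"
| "shift n ExS = ExS"
| "shift n AllS = AllS"

definition tensor :: "nat \<Rightarrow> nat \<Rightarrow> nat \<Rightarrow> nat \<Rightarrow> (nat \<Rightarrow> tval) \<Rightarrow> (nat \<Rightarrow> tval) \<Rightarrow> (nat \<Rightarrow> tval)" where
  "tensor m n m' n' f g = restrict (\<lambda>i. if i \<le> m then f i else shift n (g (i - m))) {1..m+m'}"

fun cont :: "nat \<Rightarrow> tval \<Rightarrow> bool" where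
  "cont l (Idx k) = (k \<in> {1..l})"
| "cont l (Wt r k) = (k \<in> {1..l})"
| "cont l ExS = False"
| "cont l AllS = False"

fun idx :: "tval \<Rightarrow> nat" where
  "idx (Idx k) = k"
| "idx (Wt r k) = k"
| "idx ExS = 0"
| "idx AllS = 0"

fun is_wt :: "tval \<Rightarrow> bool" where
  "is_wt (Wt r k) = True"
| "is_wt _ = False"

fun wt :: "tval \<Rightarrow> real" where
  "wt (Wt r k) = r"
| "wt _ = 0"

primrec walk :: "nat \<Rightarrow> (nat \<Rightarrow> tval) \<Rightarrow> nat \<Rightarrow> nat \<Rightarrow> tval" where
  "walk l f i 0 = Idx (l + i)"
| "walk l f i (Suc j) =
     (if j = 0 \<or> cont l (walk l f i j) then f (idx (walk l f i j)) else walk l f i j)"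

definition walk_finite :: "nat \<Rightarrow> (nat \<Rightarrow> tval) \<Rightarrow> nat \<Rightarrow> bool" where
  "walk_finite l f i \<longleftrightarrow> (\<exists>K\<ge>1. \<not> cont l (walk l f i K))"

definition walk_end :: "nat \<Rightarrow> (nat \<Rightarrow> tval) \<Rightarrow> nat \<Rightarrow> nat" where
  "walk_end l f i = (LEAST K. K \<ge> 1 \<and> \<not> cont l (walk l f i K))"

definition trace_val :: "nat \<Rightarrow> nat \<Rightarrow> (nat \<Rightarrow> tval) \<Rightarrow> nat \<Rightarrow> tval" where
  "trace_val l n f i =
    (if walk_finite l f i then
       (let K = walk_end l f i;
            v = walk l f i;
            S = (\<Sum>j\<in>{1..K}. (case v j of Wt r k \<Rightarrow> if k \<in> {1..l+n} then r else 0 | _ \<Rightarrow> 0))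
        in case v K of
             ExS \<Rightarrow> ExS
           | AllS \<Rightarrow> AllS
           | Idx p \<Rightarrow> (if \<forall>j\<in>{1..<K}. \<exists>q. v j = Idx q then Idx (p - l) else Wt S (p - l))
           | Wt r p \<Rightarrow> Wt S (p - l))
     else
       (let v = walk l f i;
            J = {j. j \<ge> 1 \<and> is_wt (v j) \<and> idx (v j) \<in> {1..l}};
            w = (\<lambda>t. wt (v (enumerate J t)))
        in if liminf (\<lambda>N. ereal ((\<Sum>t<Suc N. w t) / real (Suc N))) \<ge> 0 then ExS else AllS))"

definition tr :: "nat \<Rightarrow> nat \<Rightarrow> nat \<Rightarrow> (nat \<Rightarrow> tval) \<Rightarrow> (nat \<Rightarrow> tval)" where
  "tr l m n f = restrict (trace_val l n f) {1..m}"

text \<open>Operations carry their object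
  parameters: cmp a b c f g (f:a->b, g:b->c, diagrammatic), idn a,
  tns a b c d f g (f:a->b, g:c->d), sy a b : a+b -> b+a,
  trc l a b f : a -> b for f : l+a -> l+b (trace over the left summand).
  Associators and unitors are identities since (a+b)+c = a+(b+c), 0+a = a = a+0.\<close>

definition is_category where
  "is_category arrow cmp idn \<longleftrightarrow>
    (\<forall>a b c f g. arrow a b f \<longrightarrow> arrow b c g \<longrightarrow> arrow a c (cmp a b c f g)) \<and>
    (\<forall>a. arrow a a (idn a)) \<and>
    (\<forall>a b f. arrow a b f \<longrightarrow> cmp a a b (idn a) f = f \<and> cmp a b b f (idn b) = f) \<and>
    (\<forall>a b c d f g h. arrow a b f \<longrightarrow> arrow b c g \<longrightarrow> arrow c d h \<longrightarrow>
        cmp a c d (cmp a b c f g) h = cmp a b d f (cmp b c d g h))"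

definition is_strict_monoidal where
  "is_strict_monoidal arrow cmp idn tns \<longleftrightarrow>
    is_category arrow cmp idn \<and>
    (\<forall>a b c d f g. arrow a b f \<longrightarrow> arrow c d g \<longrightarrow> arrow (a+c) (b+d) (tns a b c d f g)) \<and>
    (\<forall>a c. tns a a c c (idn a) (idn c) = idn (a+c)) \<and>
    (\<forall>a b e c d h f f' g g'. arrow a b f \<longrightarrow> arrow b e f' \<longrightarrow> arrow c d g \<longrightarrow> arrow d h g' \<longrightarrow>
        cmp (a+c) (b+d) (e+h) (tns a b c d f g) (tns b e d h f' g')
          = tns a e c h (cmp a b e f f') (cmp c d h g g')) \<and>
    (\<forall>a b c d e h f g k. arrow a b f \<longrightarrow> arrow c d g \<longrightarrow> arrow e h k \<longrightarrow>
        tns (a+c) (b+d) e h (tns a b c d f g) k = tns a b (c+e) (d+h) f (tns c d e h g k)) \<and>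
    (\<forall>a b f. arrow a b f \<longrightarrow> tns 0 0 a b (idn 0) f = f \<and> tns a b 0 0 f (idn 0) = f)"

definition is_symmetric_monoidal where
  "is_symmetric_monoidal arrow cmp idn tns sy \<longleftrightarrow>
    is_strict_monoidal arrow cmp idn tns \<and>
    (\<forall>a b. arrow (a+b) (b+a) (sy a b)) \<and>
    (\<forall>a b. cmp (a+b) (b+a) (a+b) (sy a b) (sy b a) = idn (a+b)) \<and>
    (\<forall>a b c d f g. arrow a b f \<longrightarrow> arrow c d g \<longrightarrow>
        cmp (a+c) (b+d) (d+b) (tns a b c d f g) (sy b d)
          = cmp (a+c) (c+a) (d+b) (sy a c) (tns c d a b g f)) \<and>
    (\<forall>a b c. sy a (b+c) =
        cmp (a+b+c) (b+a+c) (b+c+a) (tns (a+b) (b+a) c c (sy a b) (idn c))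
                                    (tns b b (a+c) (c+a) (idn b) (sy a c)))"

definition is_traced_symmetric_monoidal where
  "is_traced_symmetric_monoidal arrow cmp idn tns sy trc \<longleftrightarrow>
    is_symmetric_monoidal arrow cmp idn tns sy \<and>
    \<comment> \<open>well-definedness\<close>
    (\<forall>l a b f. arrow (l+a) (l+b) f \<longrightarrow> arrow a b (trc l a b f)) \<and>
    \<comment> \<open>tightening (naturality in a and b)\<close>
    (\<forall>l a a' b b' g f h. arrow a' a g \<longrightarrow> arrow (l+a) (l+b) f \<longrightarrow> arrow b b' h \<longrightarrow>
        trc l a' b' (cmp (l+a') (l+b) (l+b')
                       (cmp (l+a') (l+a) (l+b) (tns l l a' a (idn l) g) f)
                       (tns l l b b' (idn l) h))
          = cmp a' b b' (cmp a' a b g (trc l a b f)) h) \<and>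
    \<comment> \<open>sliding (dinaturality)\<close>
    (\<forall>l l' a b f k. arrow (l+a) (l'+b) f \<longrightarrow> arrow l' l k \<longrightarrow>
        trc l a b (cmp (l+a) (l'+b) (l+b) f (tns l' l b b k (idn b)))
          = trc l' a b (cmp (l'+a) (l+a) (l'+b) (tns l' l a a k (idn a)) f)) \<and>
    \<comment> \<open>vanishing\<close>
    (\<forall>a b f. arrow a b f \<longrightarrow> trc 0 a b f = f) \<and>
    (\<forall>l l' a b f. arrow (l+l'+a) (l+l'+b) f \<longrightarrow>
        trc (l+l') a b f = trc l' a b (trc l (l'+a) (l'+b) f)) \<and>
    \<comment> \<open>superposing\<close>
    (\<forall>l a b c d f g. arrow (l+a) (l+b) f \<longrightarrow> arrow c d g \<longrightarrow>
        trc l (a+c) (b+d) (tns (l+a) (l+b) c d f g) = tns a b c d (trc l a b f) g) \<and>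
    \<comment> \<open>yanking\<close>
    (\<forall>l. trc l l l (sy l l) = idn l)"

end

theory Submission
  imports Defs
begin

fun isix :: "tval \<Rightarrow> bool" where
  "isix (Idx k) = True" | "isix (Wt r k) = True" | "isix ExS = False" | "isix AllS = False"

definition seqv :: "tval \<Rightarrow> tval \<Rightarrow> tval" where
 "seqv x y = (case x of ExS \<Rightarrow> ExS | AllS \<Rightarrow> AllS | Idx j \<Rightarrow> y
    | Wt r j \<Rightarrow> (case y of ExS \<Rightarrow> ExS | AllS \<Rightarrow> AllS | Idx k \<Rightarrow> Wt r k | Wt r' k \<Rightarrow> Wt (r + r') k))"

lemma seqv_simps[simp]:
  "seqv ExS y = ExS" "seqv AllS y = AllS" "seqv (Idx j) y = y"
  "seqv (Wt r j) ExS = ExS" "seqv (Wt r j) AllS = AllS"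
  "seqv (Wt r j) (Idx k) = Wt r k" "seqv (Wt r j) (Wt r' k) = Wt (r+r') k"
  by (simp_all add: seqv_def)

lemma seqv_assoc: "seqv (seqv x y) z = seqv x (seqv y z)"
  by (cases x; cases y; cases z) (simp_all add: add.assoc)

lemma isix_seqv: "isix x \<Longrightarrow> isix (seqv x y) = isix y"
  by (cases x; cases y) auto
lemma idx_seqv: "isix x \<Longrightarrow> idx (seqv x y) = idx y"
  by (cases x; cases y) auto
lemma cont_seqv: "isix x \<Longrightarrow> cont l (seqv x y) = cont l y"
  by (cases x; cases y) auto
lemma seqv_ExS: "isix x \<Longrightarrow> seqv x ExS = ExS" by (cases x) auto
lemma seqv_AllS: "isix x \<Longrightarrow> seqv x AllS = AllS" by (cases x) auto
lemma seqv_self: "isix x \<Longrightarrow> seqv x (Idx (idx x)) = x" by (cases x) auto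
lemma wt_seqv: "isix x \<Longrightarrow> isix y \<Longrightarrow> wt (seqv x y) = wt x + wt y"
  by (cases x; cases y) auto
lemma cont_isix: "cont l x \<Longrightarrow> isix x" by (cases x) auto
lemma notisix: "\<not> isix x \<longleftrightarrow> x = ExS \<or> x = AllS" by (cases x) auto

lemma comp_eq: "comp m l n f g = restrict (\<lambda>i. seqv (f i) (g (idx (f i)))) {1..m}"
  unfolding comp_def
  apply (rule ext) apply (auto simp: restrict_def split: tval.split)
  done

fun unsh :: "nat \<Rightarrow> tval \<Rightarrow> tval" where
  "unsh l (Idx p) = Idx (p - l)" | "unsh l (Wt r p) = Wt r (p - l)"
| "unsh l ExS = ExS" | "unsh l AllS = AllS"

lemma unsh_seqv: "isix x \<Longrightarrow> unsh l (seqv x y) = seqv x (unsh l y)"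
  by (cases x; cases y) auto
lemma seqv_unsh: "seqv (unsh l x) y = seqv x y"
  by (cases x; cases y) auto
lemma seqv_shift: "seqv (shift l x) y = seqv x y"
  by (cases x; cases y) auto
lemma unsh_shift: "unsh l (shift l x) = x"
  by (cases x) auto
lemma unsh_add: "unsh (a+b) x = unsh b (unsh a x)"
  by (cases x) auto

primrec path :: "(nat \<Rightarrow> tval) \<Rightarrow> tval \<Rightarrow> nat \<Rightarrow> tval" where
  "path F x 0 = x" | "path F x (Suc j) = F (idx (path F x j))"

lemma path_Suc': "path F x (Suc j) = path F (F (idx x)) j"
  by (induction j) auto

lemma path_Suc_fun: "(\<lambda>j. path F x (Suc j)) = path F (F (idx x))"
  using path_Suc' by auto

definition stops where "stops l F x \<longleftrightarrow> (\<exists>K. \<not> cont l (path F x K))"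
definition st where "st l F x = (LEAST K. \<not> cont l (path F x K))"
fun fv :: "(nat \<Rightarrow> tval) \<Rightarrow> nat \<Rightarrow> tval" where
  "fv p 0 = p 0" | "fv p (Suc K) = seqv (p 0) (fv (\<lambda>j. p (Suc j)) K)"
definition PS where "PS F x N = (\<Sum>j<N. wt (path F x j))"
definition nb where "nb F x \<longleftrightarrow> (\<exists>B. \<forall>N. B \<le> PS F x N)"
definition res where
  "res l F x = (if stops l F x then fv (path F x) (st l F x) else if nb F x then ExS else AllS)"

lemma stops_st: "stops l F x \<Longrightarrow> \<not> cont l (path F x (st l F x))"
  unfolding stops_def st_def by (metis LeastI)
lemma stops_st_less: "j < st l F x \<Longrightarrow> cont l (path F x j)"
  unfolding st_def using not_less_Least by blast
lemma nstops: "\<not> stops l F x \<Longrightarrow> cont l (path F x K)"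
  unfolding stops_def by auto

lemma res_nc: "\<not> cont l x \<Longrightarrow> res l F x = x"
proof -
  assume a: "\<not> cont l x"
  hence s: "stops l F x" unfolding stops_def by (metis path.simps(1))
  have "st l F x = 0" unfolding st_def using a by (metis (mono_tags, lifting) Least_eq_0 path.simps(1))
  thus ?thesis using s unfolding res_def by simp
qed

lemma stops_Suc: "cont l x \<Longrightarrow> stops l F x = stops l F (F (idx x))"
  unfolding stops_def by (metis not0_implies_Suc path.simps(1) path_Suc')

lemma st_Suc: "cont l x \<Longrightarrow> stops l F x \<Longrightarrow> st l F x = Suc (st l F (F (idx x)))"
proof -
  assume c: "cont l x" and s: "stops l F x"
  have s2: "stops l F (F (idx x))" using stops_Suc[OF c] s by simp
  have ne: "st l F x \<noteq> 0" using stops_st[OF s] c by (metis path.simps(1))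
  then obtain k where k: "st l F x = Suc k" using not0_implies_Suc by blast
  have "\<not> cont l (path F (F (idx x)) k)" using stops_st[OF s] k path_Suc' by metis
  hence le1: "st l F (F (idx x)) \<le> k" unfolding st_def by (simp add: Least_le)
  have "\<not> cont l (path F x (Suc (st l F (F (idx x)))))" using stops_st[OF s2] path_Suc' by metis
  hence "st l F x \<le> Suc (st l F (F (idx x)))" unfolding st_def by (simp add: Least_le)
  thus ?thesis using le1 k by simp
qed

lemma PS_Suc: "PS F x (Suc N) = wt x + PS F (F (idx x)) N"
  unfolding PS_def sum.lessThan_Suc_shift path_Suc' by simp

lemma nb_shift:
  assumes "\<And>N. PS F x (Suc N) = c + PS G y N" "PS F x 0 = 0" "PS G y 0 = 0"
  shows "nb F x = nb G y"
proof
  assume "nb F x" then obtain B where B: "\<And>N. B \<le> PS F x N" unfolding nb_def by auto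
  have "B - c \<le> PS G y N" for N using B[of "Suc N"] assms(1)[of N] by simp
  thus "nb G y" unfolding nb_def by auto
next
  assume "nb G y" then obtain B where B: "\<And>N. B \<le> PS G y N" unfolding nb_def by auto
  have "min 0 (B + c) \<le> PS F x N" for N
    using B[of "N - 1"] assms(1)[of "N - 1"] assms(2) by (cases N) auto
  thus "nb F x" unfolding nb_def by blast
qed

lemma PS_0[simp]: "PS F x 0 = 0" unfolding PS_def by simp

lemma nb_Suc: "nb F x = nb F (F (idx x))"
  by (rule nb_shift[where c = "wt x"]) (simp_all add: PS_Suc)

lemma fv_path_Suc: "fv (path F x) (Suc K) = seqv x (fv (path F (F (idx x))) K)"
  by (simp only: fv.simps path_Suc_fun) simp

lemma res_cont: "cont l x \<Longrightarrow> res l F x = seqv x (res l F (F (idx x)))"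
proof -
  assume c: "cont l x"
  have ix: "isix x" using c cont_isix by blast
  show ?thesis
  proof (cases "stops l F x")
    case True
    then show ?thesis using stops_Suc[OF c] st_Suc[OF c True] unfolding res_def
      by (simp add: fv_path_Suc del: fv.simps path.simps)
  next
    case False
    then show ?thesis using stops_Suc[OF c] nb_Suc[of F x] ix unfolding res_def
      by (simp add: seqv_ExS seqv_AllS)
  qed
qed

lemma res_prefix: "isix z \<Longrightarrow> res l F (seqv z w) = seqv z (res l F w)"
proof (cases "cont l w")
  case True
  assume z: "isix z"
  have c: "cont l (seqv z w)" using True cont_seqv[OF z] by simp
  show ?thesis using res_cont[OF c] res_cont[OF True] idx_seqv[OF z] seqv_assoc by simp
next
  case False
  assume z: "isix z"
  have c: "\<not> cont l (seqv z w)" using False cont_seqv[OF z] by simp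
  show ?thesis using res_nc[OF c] res_nc[OF False] by simp
qed

lemma st_induct:
  assumes "stops l F x"
    and "\<And>x. stops l F x \<Longrightarrow> (\<And>y. stops l F y \<Longrightarrow> st l F y < st l F x \<Longrightarrow> P y) \<Longrightarrow> P x"
  shows "P x"
proof -
  have "\<forall>x. stops l F x \<longrightarrow> st l F x = n \<longrightarrow> P x" for n
    by (induction n rule: less_induct) (use assms(2) in blast)
  thus ?thesis using assms(1) by blast
qed

lemma res_induct:
  assumes "\<And>w. \<not> cont l w \<Longrightarrow> P w"
    and "\<And>w. cont l w \<Longrightarrow> stops l F w \<Longrightarrow> P (F (idx w)) \<Longrightarrow> P w"
    and "\<And>w. \<not> stops l F w \<Longrightarrow> P w"
  shows "P x"
proof (cases "stops l F x")
  case True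
  have "\<forall>x. stops l F x \<longrightarrow> st l F x = n \<longrightarrow> P x" for n
  proof (induction n rule: less_induct)
    case (less n)
    show ?case
    proof (intro allI impI)
      fix x assume s: "stops l F x" and e: "st l F x = n"
      show "P x"
      proof (cases "cont l x")
        case True
        then show ?thesis using less s e assms(2) st_Suc stops_Suc by (metis lessI)
      qed (use assms(1) in auto)
    qed
  qed
  then show ?thesis using True by blast
qed (use assms(3) in auto)

lemma res_nstops: "\<not> stops l F x \<Longrightarrow> res l F x = (if nb F x then ExS else AllS)"
  unfolding res_def by simp

lemma periodic_mult:
  assumes "\<forall>j\<ge>s. (w::nat \<Rightarrow> 'a) (j + P) = w j"
  shows "\<forall>j\<ge>s. w (j + k * P) = w j"
proof (induction k)
  case (Suc k)
  show ?case
  proof (intro allI impI)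
    fix j assume j: "s \<le> j"
    have "w (j + Suc k * P) = w ((j + k * P) + P)" by (simp add: algebra_simps)
    also have "\<dots> = w (j + k * P)" using assms j by simp
    also have "\<dots> = w j" using Suc j by simp
    finally show "w (j + Suc k * P) = w j" .
  qed
qed simp

lemma window_sum:
  fixes w :: "nat \<Rightarrow> real"
  assumes "\<forall>j\<ge>s. w (j + P) = w j"
  shows "M \<ge> s \<Longrightarrow> (\<Sum>j\<in>{M..<M+P}. w j) = (\<Sum>j\<in>{s..<s+P}. w j)"
proof (induction M rule: dec_induct)
  case (step M)
  have a: "(\<Sum>j\<in>{M..<M+P}. w j) + w (M+P) = w M + (\<Sum>j\<in>{Suc M..<Suc M+P}. w j)"
  proof (cases P)
    case 0 then show ?thesis by simp
  next
    case (Suc Q)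
    have "(\<Sum>j\<in>{M..<M+P}. w j) = w M + (\<Sum>j\<in>{Suc M..<M+P}. w j)"
      using Suc by (simp add: sum.atLeast_Suc_lessThan)
    moreover have "(\<Sum>j\<in>{Suc M..<Suc M+P}. w j) = (\<Sum>j\<in>{Suc M..<M+P}. w j) + w (M+P)"
      using Suc by simp
    ultimately show ?thesis by simp
  qed
  have "w (M+P) = w M" using assms step by simp
  thus ?case using a step by simp
qed simp

lemma periodic_bound:
  fixes w :: "nat \<Rightarrow> real"
  assumes P: "P > 0" and per: "\<forall>j\<ge>s. w (j + P) = w j"
  defines "C \<equiv> (\<Sum>j\<in>{s..<s+P}. w j)"
  shows "\<exists>B. \<forall>M. \<bar>(\<Sum>j<M. w j) - M * C / P\<bar> \<le> B"
proof -
  define D where "D M = (\<Sum>j<M. w j) - M * C / P" for M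
  have DP: "D (M + P) = D M" if "M \<ge> s" for M
  proof -
    have "(\<Sum>j<M+P. w j) = (\<Sum>j<M. w j) + (\<Sum>j\<in>{M..<M+P}. w j)"
      by (subst (1 2) lessThan_atLeast0, rule sum.atLeastLessThan_concat[symmetric]) auto
    also have "(\<Sum>j\<in>{M..<M+P}. w j) = C" unfolding C_def using window_sum[OF per that] .
    finally show ?thesis unfolding D_def using P by (simp add: field_simps)
  qed
  have inS: "D M \<in> D ` {..<s+P}" for M
  proof (induction M rule: less_induct)
    case (less M)
    show ?case
    proof (cases "M < s + P")
      case False
      then have "M - P \<ge> s" "M - P < M" using P by auto
      then have "D M = D (M - P)" using DP[of "M - P"] False by simp
      then show ?thesis using less \<open>M - P < M\<close> by simp
    qed simp
  qed
  define B where "B = Max ((\<lambda>M. \<bar>D M\<bar>) ` {..<s+P})"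
  have "\<bar>D M\<bar> \<le> B" for M
  proof -
    obtain M' where "M' < s + P" "D M = D M'" using inS[of M] by auto
    thus ?thesis unfolding B_def by (intro Max_ge) auto
  qed
  thus ?thesis unfolding D_def by blast
qed

lemma periodic_nb:
  fixes w :: "nat \<Rightarrow> real" and \<gamma> :: "nat \<Rightarrow> nat"
  assumes P: "P > 0" and per: "\<forall>j\<ge>s. w (j + P) = w j"
    and g: "\<forall>J. \<gamma> J \<ge> J" and b: "\<forall>J. B \<le> (\<Sum>j<\<gamma> J. w j)"
  shows "\<exists>B. \<forall>M. B \<le> (\<Sum>j<M. w j)"
proof -
  define C where "C = (\<Sum>j\<in>{s..<s+P}. w j)"
  obtain B' where B0: "\<And>M. \<bar>(\<Sum>j<M. w j) - M * C / P\<bar> \<le> B'"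
    using periodic_bound[OF P per] unfolding C_def by blast
  have B': "(\<Sum>j<M. w j) - M * C / P \<le> B' \<and> - ((\<Sum>j<M. w j) - M * C / P) \<le> B'" for M
    using B0[of M] unfolding abs_le_iff .
  show ?thesis
  proof (cases "C \<ge> 0")
    case True
    have "- B' \<le> (\<Sum>j<M. w j)" for M
    proof -
      have "M * C / P \<ge> 0" using True P by simp
      thus ?thesis using B'[of M] by linarith
    qed
    thus ?thesis by blast
  next
    case False
    obtain J :: nat where J: "J > (B' - B) * P / (- C)" using reals_Archimedean2 by blast
    have "J * (- C) / P > B' - B" using J False P by (simp add: field_simps)
    hence "J * C / P < B - B'" by (simp add: field_simps)
    moreover have "\<gamma> J * C / P \<le> J * C / P" using g False P
      by (simp add: divide_right_mono mult_right_mono_neg)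
    moreover have "(\<Sum>j<\<gamma> J. w j) \<le> \<gamma> J * C / P + B'" using B'[of "\<gamma> J"] by linarith
    ultimately have "(\<Sum>j<\<gamma> J. w j) < B" by linarith
    thus ?thesis using b by (meson not_le)
  qed
qed

lemma enum_sum:
  fixes w :: "nat \<Rightarrow> real"
  assumes inf: "infinite J" and zero: "\<forall>j. j \<notin> J \<longrightarrow> w j = 0"
  shows "(\<Sum>t<Suc N. w (enumerate J t)) = (\<Sum>j<Suc (enumerate J N). w j)"
proof -
  let ?e = "enumerate J"
  have sm: "strict_mono ?e" using strict_mono_enumerate[OF inf] .
  have img: "{..<Suc (?e N)} \<inter> J = ?e ` {..<Suc N}"
  proof
    show "?e ` {..<Suc N} \<subseteq> {..<Suc (?e N)} \<inter> J"
      using enumerate_in_set[OF inf] sm by (auto simp: strict_mono_less_eq less_Suc_eq_le)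
  next
    show "{..<Suc (?e N)} \<inter> J \<subseteq> ?e ` {..<Suc N}"
    proof
      fix j assume j: "j \<in> {..<Suc (?e N)} \<inter> J"
      then obtain m where m: "?e m = j" using enumerate_Ex[OF inf] by blast
      hence "m \<le> N" using j sm by (auto simp: strict_mono_less_eq less_Suc_eq_le)
      thus "j \<in> ?e ` {..<Suc N}" using m by auto
    qed
  qed
  have "(\<Sum>j<Suc (?e N). w j) = sum w ({..<Suc (?e N)} \<inter> J)"
    by (rule sum.mono_neutral_cong_right) (use zero in auto)
  also have "\<dots> = sum w (?e ` {..<Suc N})" using img by simp
  also have "\<dots> = (\<Sum>t<Suc N. w (?e t))"
    by (simp only: sum.reindex[OF strict_mono_imp_inj_on[OF sm]] o_def)
  finally show ?thesis by simp
qed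

lemma tendsto_const_div_Suc: "(\<lambda>N. (B::real) / real (Suc N)) \<longlonglongrightarrow> 0"
  using tendsto_mult_right_zero[OF LIMSEQ_inverse_real_of_nat, of B] by (simp add: divide_inverse)

lemma liminf_crit:
  fixes w :: "nat \<Rightarrow> real"
  assumes P: "P > 0" and per: "\<forall>j\<ge>s. w (j + P) = w j"
    and inf: "infinite J" and zero: "\<forall>j. j \<notin> J \<longrightarrow> w j = 0"
  shows "(liminf (\<lambda>N. ereal ((\<Sum>t<Suc N. w (enumerate J t)) / real (Suc N))) \<ge> 0)
          \<longleftrightarrow> (\<exists>B. \<forall>M. B \<le> (\<Sum>j<M. w j))"
proof -
  let ?e = "enumerate J"
  let ?a = "\<lambda>N. (\<Sum>t<Suc N. w (?e t)) / real (Suc N)"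
  have a_eq: "?a N = (\<Sum>j<Suc (?e N). w j) / real (Suc N)" for N
    by (subst enum_sum[OF inf zero]) (rule refl)
  define C where "C = (\<Sum>j\<in>{s..<s+P}. w j)"
  obtain B' where B0: "\<And>M. \<bar>(\<Sum>j<M. w j) - M * C / P\<bar> \<le> B'"
    using periodic_bound[OF P per] unfolding C_def by blast
  have B': "(\<Sum>j<M. w j) - M * C / P \<le> B' \<and> - ((\<Sum>j<M. w j) - M * C / P) \<le> B'" for M
    using B0[of M] unfolding abs_le_iff .
  show ?thesis
  proof
    assume L: "liminf (\<lambda>N. ereal (?a N)) \<ge> 0"
    show "\<exists>B. \<forall>M. B \<le> (\<Sum>j<M. w j)"
    proof (cases "C \<ge> 0")
      case True
      have "- B' \<le> (\<Sum>j<M. w j)" for M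
      proof -
        have "M * C / P \<ge> 0" using True P by simp
        thus ?thesis using B'[of M] by linarith
      qed
      thus ?thesis by blast
    next
      case False
      have le: "?a N \<le> C / P + B' / real (Suc N)" for N
      proof -
        have "Suc (?e N) \<ge> Suc N" using le_enumerate[OF inf] by simp
        hence "real (Suc (?e N)) * C / P \<le> real (Suc N) * C / P"
          using False P by (simp add: divide_right_mono mult_right_mono_neg)
        hence "(\<Sum>j<Suc (?e N). w j) \<le> real (Suc N) * C / P + B'" using B'[of "Suc (?e N)"] by linarith
        hence "(\<Sum>j<Suc (?e N). w j) / real (Suc N) \<le> (real (Suc N) * C / P + B') / real (Suc N)"
          by (simp add: divide_right_mono)
        also have "\<dots> = C / P + B' / real (Suc N)" by (simp add: field_simps)
        finally show ?thesis unfolding a_eq .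
      qed
      have "liminf (\<lambda>N. ereal (?a N)) \<le> liminf (\<lambda>N. ereal (C / P + B' / real (Suc N)))"
        by (rule Liminf_mono) (use le in auto)
      also have "\<dots> = ereal (C / P)"
      proof (rule lim_imp_Liminf)
        have "(\<lambda>N. C / P + B' / real (Suc N)) \<longlonglongrightarrow> C / P + 0"
          by (intro tendsto_add tendsto_const tendsto_const_div_Suc)
        thus "(\<lambda>N. ereal (C / P + B' / real (Suc N))) \<longlonglongrightarrow> ereal (C / P)"
          unfolding lim_ereal by simp
      qed simp
      finally have X: "liminf (\<lambda>N. ereal (?a N)) \<le> ereal (C / P)" .
      have "0 \<le> ereal (C / P)" using L X by (rule order_trans)
      hence "C / P \<ge> 0" by simp
      hence "C \<ge> 0" using P by (simp add: zero_le_divide_iff)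
      thus ?thesis using False by simp
    qed
  next
    assume "\<exists>B. \<forall>M. B \<le> (\<Sum>j<M. w j)"
    then obtain B where B: "\<And>M. B \<le> (\<Sum>j<M. w j)" by blast
    define B1 where "B1 = min B 0"
    have ge: "B1 / real (Suc N) \<le> ?a N" for N
    proof -
      have "B1 \<le> (\<Sum>j<Suc (?e N). w j)" using B unfolding B1_def by (meson min.coboundedI1)
      thus ?thesis unfolding a_eq by (rule divide_right_mono) simp
    qed
    have "ereal 0 = liminf (\<lambda>N. ereal (B1 / real (Suc N)))"
      by (rule lim_imp_Liminf[symmetric]) (simp_all only: lim_ereal tendsto_const_div_Suc trivial_limit_sequentially not_False_eq_True)
    also have "\<dots> \<le> liminf (\<lambda>N. ereal (?a N))"
      by (rule Liminf_mono) (use ge in auto)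
    finally show "liminf (\<lambda>N. ereal (?a N)) \<ge> 0" by (simp add: zero_ereal_def)
  qed
qed

lemma cont_idx: "cont l v \<Longrightarrow> idx v \<in> {1..l}" by (cases v) auto
lemma isix_idx_cont: "isix v \<Longrightarrow> idx v \<in> {1..l} \<Longrightarrow> cont l v" by (cases v) auto
lemma wt_nwt: "\<not> is_wt v \<Longrightarrow> wt v = 0" by (cases v) auto
lemma cont_nwt: "cont l v \<Longrightarrow> \<not> is_wt v \<Longrightarrow> v = Idx (idx v)" by (cases v) auto

lemma arr_real:
  assumes "arr m n f" "i \<in> {1..m}" "j \<in> {1..m}" "f i = Idx k" "isix (f j)" "idx (f j) = k"
  shows "i = j"
proof (rule ccontr)
  assume "i \<noteq> j"
  hence "case f i of Idx k \<Rightarrow> f j \<noteq> Idx k \<and> (\<forall>r. f j \<noteq> Wt r k) | _ \<Rightarrow> True"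
    using assms(1-3) unfolding arr_def by blast
  thus False using assms(4-6) by (cases "f j") auto
qed

lemma arr_inT: "arr m n f \<Longrightarrow> i \<in> {1..m} \<Longrightarrow> inT n (f i)"
  unfolding arr_def by blast
lemma arr_ext: "arr m n f \<Longrightarrow> f \<in> extensional {1..m}"
  unfolding arr_def by blast

lemma path_periodic:
  assumes c: "\<forall>t. cont l (path F x t)"
  shows "\<exists>s P. P > 0 \<and> (\<forall>j\<ge>s. path F x (j + P) = path F x j)"
proof -
  let ?h = "\<lambda>t. idx (path F x t)"
  have sub: "?h ` {0..l} \<subseteq> {1..l}" using c cont_idx by blast
  have "\<not> inj_on ?h {0..l}"
  proof
    assume "inj_on ?h {0..l}"
    hence "card {0..l} \<le> card {1..l}" using card_inj_on_le[OF _ sub] by simp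
    thus False by simp
  qed
  then obtain a b where ab: "a \<in> {0..l}" "b \<in> {0..l}" "a \<noteq> b" "?h a = ?h b"
    unfolding inj_on_def by blast
  obtain a' b' where ab': "a' < b'" "?h a' = ?h b'"
    using ab by (metis linorder_neqE_nat)
  have eq: "path F x (Suc a' + d) = path F x (Suc b' + d)" for d
    by (induction d) (use ab' in auto)
  show ?thesis
  proof (intro exI conjI allI impI)
    show "b' - a' > 0" using ab' by simp
    fix j assume "Suc a' \<le> j"
    then obtain d where "j = Suc a' + d" by (metis le_add_diff_inverse)
    thus "path F x (j + (b' - a')) = path F x j" using eq[of d] ab' by (simp add: algebra_simps)
  qed
qed

lemma inf_weighted:
  assumes f: "arr (l+a) (l+n) f" and i: "i \<in> {1..a}"
    and c: "\<forall>t. cont l (path f (f (l+i)) t)"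
  shows "infinite {t. is_wt (path f (f (l+i)) t)}"
proof
  let ?p = "path f (f (l+i))"
  assume fin: "finite {t. is_wt (?p t)}"
  then obtain m where m: "\<forall>t\<ge>m. \<not> is_wt (?p t)"
    by (metis (mono_tags, lifting) finite_nat_set_iff_bounded_le mem_Collect_eq not_less_eq_eq)
  obtain s P where P: "P > 0" and per: "\<forall>j\<ge>s. ?p (j + P) = ?p j"
    using path_periodic[OF c] by blast
  define P' where "P' = Suc s * P"
  have P'1: "P' \<ge> Suc s" unfolding P'_def using P by (cases P) auto
  have per': "\<forall>j\<ge>s. ?p (j + k * P') = ?p j" for k
    unfolding P'_def using periodic_mult[OF periodic_mult[OF per, of "Suc s"], of k]
    by (simp add: mult.assoc)
  have plain: "?p t = Idx (idx (?p t))" if "t \<ge> s" for t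
  proof -
    have "?p t = ?p (t + m * P')" using per' that by simp
    moreover have "t + m * P' \<ge> m" using P'1 by (simp add: trans_le_add2)
    ultimately have "\<not> is_wt (?p t)" using m by metis
    thus ?thesis using cont_nwt c by blast
  qed
  define src where "src t = (if t = 0 then l + i else idx (?p (t - 1)))" for t
  have psrc: "?p t = f (src t)" for t unfolding src_def by (cases t) auto
  have src_dom: "src t \<in> {1..l+a}" for t
    unfolding src_def using i cont_idx[OF c[rule_format]] by (cases t) (auto simp: trans_le_add1)
  have src_l: "src t \<in> {1..l}" if "t \<ge> 1" for t
    unfolding src_def using that cont_idx[OF c[rule_format]] by auto
  define Q where "Q q \<longleftrightarrow> src (q + P') = src q" for q
  have "Q (Suc s)"
    unfolding Q_def src_def using per' [rule_format, of s 1] by simp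
  hence Qq0: "Q (LEAST q. Q q)" by (rule LeastI)
  show False
  proof (cases "(LEAST q. Q q)")
    case 0
    hence "src (0 + P') = src 0" using Qq0 unfolding Q_def by simp
    hence "src P' = l + i" by (simp add: src_def)
    moreover have "src P' \<in> {1..l}" using src_l P'1 by simp
    ultimately show False using i by simp
  next
    case (Suc q')
    hence "src (Suc (q' + P')) = src (Suc q')" using Qq0 unfolding Q_def by simp
    hence "idx (?p (q' + P')) = idx (?p q')" unfolding src_def by simp
    moreover have "?p (q' + P') = Idx (idx (?p (q' + P')))" using plain P'1 by simp
    ultimately have "f (src (q' + P')) = Idx (idx (?p q'))" using psrc by metis
    moreover have "isix (f (src q'))" using c cont_isix psrc by metis
    ultimately have "src (q' + P') = src q'"
      using arr_real[OF f src_dom src_dom] psrc by metis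
    hence "Q q'" unfolding Q_def by simp
    thus False using Suc not_less_Least by (metis lessI)
  qed
qed

lemma all_less_Suc_split: "(\<forall>j<Suc K. P j) \<longleftrightarrow> P 0 \<and> (\<forall>j<K. P (Suc j))"
  by (auto simp: less_Suc_eq_0_disj)

lemma fv_formula:
  "(\<forall>j<K. isix (p j)) \<Longrightarrow> fv p K = (case p K of ExS \<Rightarrow> ExS | AllS \<Rightarrow> AllS
     | Idx q \<Rightarrow> (if (\<forall>j<K. \<exists>q. p j = Idx q) then Idx q else Wt (\<Sum>j\<le>K. wt (p j)) q)
     | Wt r q \<Rightarrow> Wt (\<Sum>j\<le>K. wt (p j)) q)"
proof (induction K arbitrary: p)
  case 0
  then show ?case by (cases "p 0") auto
next
  case (Suc K)
  let ?p = "\<lambda>j. p (Suc j)"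
  have h: "\<forall>j<K. isix (?p j)" using Suc.prems by auto
  note IH = Suc.IH[OF h]
  have p0: "isix (p 0)" using Suc.prems by auto
  have sum: "(\<Sum>j\<le>Suc K. wt (p j)) = wt (p 0) + (\<Sum>j\<le>K. wt (?p j))"
    by (rule sum.atMost_Suc_shift)
  have al: "(\<forall>j<Suc K. \<exists>q. p j = Idx q) \<longleftrightarrow> (\<exists>q. p 0 = Idx q) \<and> (\<forall>j<K. \<exists>q. ?p j = Idx q)"
    by (rule all_less_Suc_split)
  have wt0: "(\<forall>j<K. \<exists>q. ?p j = Idx q) \<Longrightarrow> (\<Sum>j\<le>K. wt (?p j)) = wt (?p K)"
  proof -
    assume a: "\<forall>j<K. \<exists>q. ?p j = Idx q"
    have "(\<Sum>j\<le>K. wt (?p j)) = (\<Sum>j<K. wt (?p j)) + wt (?p K)" by (simp add: lessThan_Suc_atMost[symmetric])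
    also have "(\<Sum>j<K. wt (?p j)) = 0" using a by (intro sum.neutral) auto
    finally show ?thesis by simp
  qed
  show ?case
  proof (cases "p 0")
    case (Idx j)
    show ?thesis unfolding fv.simps sum al IH by (auto simp: Idx split: tval.split)
  next
    case (Wt r j)
    have nal: "\<not> (\<forall>j<Suc K. \<exists>q. p j = Idx q)" using Wt by auto
    show ?thesis
    proof (cases "p (Suc K)")
      case (Idx q)
      show ?thesis
      proof (cases "\<forall>j<K. \<exists>q. ?p j = Idx q")
        case True
        then show ?thesis unfolding fv.simps IH sum using Wt Idx nal wt0[OF True] by auto
      next
        case False
        then show ?thesis unfolding fv.simps IH sum using Wt Idx nal by auto
      qed
    next
      case (Wt r' q)
      then show ?thesis unfolding fv.simps IH sum using \<open>p 0 = Wt r j\<close> by simp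
    next
      case ExS
      then show ?thesis unfolding fv.simps IH using \<open>p 0 = Wt r j\<close> by simp
    next
      case AllS
      then show ?thesis unfolding fv.simps IH using \<open>p 0 = Wt r j\<close> by simp
    qed
  next
    case ExS then show ?thesis using p0 by simp
  next
    case AllS then show ?thesis using p0 by simp
  qed
qed

lemma walk_path:
  "(\<forall>t<j. cont l (path f (f (l+i)) t)) \<Longrightarrow> walk l f i (Suc j) = path f (f (l+i)) j"
  by (induction j) auto

declare walk.simps(2)[simp del]

lemma bdd_shift:
  fixes A G :: "nat \<Rightarrow> real"
  assumes "\<And>N. A (Suc N) = c + G N" "A 0 = 0" "G 0 = 0"
  shows "(\<exists>B. \<forall>M. B \<le> A M) \<longleftrightarrow> (\<exists>B. \<forall>M. B \<le> G M)"
proof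
  assume "\<exists>B. \<forall>M. B \<le> A M" then obtain B where B: "\<And>N. B \<le> A N" by auto
  have "B - c \<le> G N" for N using B[of "Suc N"] assms(1)[of N] by simp
  thus "\<exists>B. \<forall>M. B \<le> G M" by auto
next
  assume "\<exists>B. \<forall>M. B \<le> G M" then obtain B where B: "\<And>N. B \<le> G N" by auto
  have "min 0 (B + c) \<le> A N" for N
    using B[of "N - 1"] assms(1)[of "N - 1"] assms(2) by (cases N) auto
  thus "\<exists>B. \<forall>M. B \<le> A M" by blast
qed

theorem TV:
  assumes f: "arr (l+a) (l+n) f" and i: "i \<in> {1..a}"
  shows "trace_val l n f i = unsh l (res l f (f (l+i)))"
proof -
  let ?x = "f (l+i)"
  let ?p = "path f ?x"
  let ?v = "walk l f i"
  show ?thesis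
  proof (cases "stops l f ?x")
    case True
    define K0 where "K0 = st l f ?x"
    have cK: "\<forall>t<K0. cont l (?p t)" unfolding K0_def using stops_st_less by blast
    have nK: "\<not> cont l (?p K0)" unfolding K0_def using stops_st[OF True] .
    have vp: "?v (Suc j) = ?p j" if "j \<le> K0" for j
      using walk_path[of j l f i] cK that by auto
    have wf: "walk_finite l f i" unfolding walk_finite_def
      using vp[of K0] nK by (intro exI[of _ "Suc K0"]) auto
    have we: "walk_end l f i = Suc K0" unfolding walk_end_def
    proof (rule Least_equality)
      show "Suc K0 \<ge> 1 \<and> \<not> cont l (?v (Suc K0))" using vp[of K0] nK by simp
      fix K assume K: "K \<ge> 1 \<and> \<not> cont l (?v K)"
      show "Suc K0 \<le> K"
      proof (rule ccontr)
        assume "\<not> Suc K0 \<le> K"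
        then obtain j where "K = Suc j" "j < K0" using K by (cases K) auto
        thus False using K vp[of j] cK by simp
      qed
    qed
    have inT: "inT (l+n) (?p j)" if "j \<le> K0" for j
    proof (cases j)
      case 0 then show ?thesis using arr_inT[OF f] i by simp
    next
      case (Suc j')
      hence "j' < K0" using that by simp
      hence "idx (?p j') \<in> {1..l}" using cK cont_idx by blast
      hence "idx (?p j') \<in> {1..l+a}" by simp
      then show ?thesis using arr_inT[OF f] Suc by simp
    qed
    have isx: "\<forall>j<K0. isix (?p j)" using cK cont_isix by blast
    have S: "(\<Sum>j\<in>{1..Suc K0}. (case ?v j of Wt r k \<Rightarrow> if k \<in> {1..l+n} then r else 0 | _ \<Rightarrow> 0))
             = (\<Sum>j\<le>K0. wt (?p j))"
    proof -
      have "(\<Sum>j\<in>{1..Suc K0}. (case ?v j of Wt r k \<Rightarrow> if k \<in> {1..l+n} then r else 0 | _ \<Rightarrow> 0))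
          = (\<Sum>j\<in>{0..K0}. (case ?v (Suc j) of Wt r k \<Rightarrow> if k \<in> {1..l+n} then r else 0 | _ \<Rightarrow> 0))"
        unfolding One_nat_def by (rule sum.shift_bounds_cl_Suc_ivl)
      also have "\<dots> = (\<Sum>j\<in>{0..K0}. wt (?p j))"
      proof (rule sum.cong)
        fix j assume j: "j \<in> {0..K0}"
        show "(case ?v (Suc j) of Wt r k \<Rightarrow> if k \<in> {1..l+n} then r else 0 | _ \<Rightarrow> 0) = wt (?p j)"
          using vp[of j] inT[of j] j by (cases "?p j") auto
      qed simp
      finally show ?thesis by (simp add: atMost_atLeast0)
    qed
    have allI: "(\<forall>j\<in>{1..<Suc K0}. \<exists>q. ?v j = Idx q) \<longleftrightarrow> (\<forall>j<K0. \<exists>q. ?p j = Idx q)"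
    proof
      assume a: "\<forall>j\<in>{1..<Suc K0}. \<exists>q. ?v j = Idx q"
      show "\<forall>j<K0. \<exists>q. ?p j = Idx q"
      proof (intro allI impI)
        fix j assume "j < K0" thus "\<exists>q. ?p j = Idx q" using a[rule_format, of "Suc j"] vp[of j] by simp
      qed
    next
      assume a: "\<forall>j<K0. \<exists>q. ?p j = Idx q"
      show "\<forall>j\<in>{1..<Suc K0}. \<exists>q. ?v j = Idx q"
      proof
        fix j assume j: "j \<in> {1..<Suc K0}"
        then obtain j' where "j = Suc j'" "j' < K0" by (cases j) auto
        thus "\<exists>q. ?v j = Idx q" using a vp[of j'] by simp
      qed
    qed
    have res: "res l f ?x = fv ?p K0" unfolding res_def K0_def using True by simp
    have vK: "?v (Suc K0) = ?p K0" using vp by simp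
    have tv: "trace_val l n f i = (case ?p K0 of ExS \<Rightarrow> ExS | AllS \<Rightarrow> AllS
           | Idx p \<Rightarrow> (if \<forall>j<K0. \<exists>q. ?p j = Idx q then Idx (p - l) else Wt (\<Sum>j\<le>K0. wt (?p j)) (p - l))
           | Wt r p \<Rightarrow> Wt (\<Sum>j\<le>K0. wt (?p j)) (p - l))"
      unfolding trace_val_def Let_def
      by (simp only: wf we if_True vK S allI)
    show ?thesis
      unfolding tv res fv_formula[OF isx]
      by (cases "?p K0") simp_all
  next
    case False
    have cA: "\<forall>t. cont l (?p t)" using nstops[OF False] by blast
    have vp: "?v (Suc j) = ?p j" for j using walk_path[of j l f i] cA by auto
    have nwf: "\<not> walk_finite l f i" unfolding walk_finite_def
    proof
      assume "\<exists>K\<ge>1. \<not> cont l (?v K)"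
      then obtain K where "K \<ge> 1" "\<not> cont l (?v K)" by blast
      then obtain j where "K = Suc j" "\<not> cont l (?v (Suc j))" by (cases K) auto
      thus False using vp cA by simp
    qed
    define J where "J = {j. j \<ge> 1 \<and> is_wt (?v j) \<and> idx (?v j) \<in> {1..l}}"
    have J: "J = Suc ` {t. is_wt (?p t)}"
    proof
      show "J \<subseteq> Suc ` {t. is_wt (?p t)}"
      proof
        fix j assume "j \<in> J"
        then obtain j' where "j = Suc j'" "is_wt (?p j')" unfolding J_def using vp by (cases j) auto
        thus "j \<in> Suc ` {t. is_wt (?p t)}" by auto
      qed
      have "\<forall>t. idx (?p t) \<in> {1..l}" using cA cont_idx by blast
      thus "Suc ` {t. is_wt (?p t)} \<subseteq> J" unfolding J_def using vp by auto
    qed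
    have infJ: "infinite J" unfolding J using inf_weighted[OF f i cA]
      by (simp add: finite_image_iff)
    obtain s P where P: "P > 0" and per: "\<forall>j\<ge>s. ?p (j + P) = ?p j"
      using path_periodic[OF cA] by blast
    have perw: "\<forall>j\<ge>Suc s. wt (?v (j + P)) = wt (?v j)"
    proof (intro allI impI)
      fix j assume "Suc s \<le> j"
      then obtain j' where "j = Suc j'" "j' \<ge> s" by (cases j) auto
      thus "wt (?v (j + P)) = wt (?v j)" using per vp by (metis add_Suc)
    qed
    have zero: "\<forall>j. j \<notin> J \<longrightarrow> wt (?v j) = 0"
    proof (intro allI impI)
      fix j assume "j \<notin> J"
      show "wt (?v j) = 0"
      proof (cases j)
        case 0 then show ?thesis by simp
      next
        case (Suc j')
        hence "\<not> is_wt (?p j')" using \<open>j \<notin> J\<close> J by auto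
        thus ?thesis using Suc vp wt_nwt by simp
      qed
    qed
    note crit = liminf_crit[OF P perw infJ zero]
    have bs: "(\<exists>B. \<forall>M. B \<le> (\<Sum>j<M. wt (?v j))) \<longleftrightarrow> nb f ?x"
      unfolding nb_def
    proof (rule bdd_shift[where c = 0])
      fix N show "(\<Sum>j<Suc N. wt (?v j)) = 0 + PS f ?x N"
        unfolding PS_def sum.lessThan_Suc_shift vp by simp
    qed simp_all
    have res: "res l f ?x = (if nb f ?x then ExS else AllS)" using res_nstops[OF False] .
    have tv: "trace_val l n f i = (if liminf (\<lambda>N. ereal ((\<Sum>t<Suc N. wt (?v (enumerate J t))) / real (Suc N))) \<ge> 0 then ExS else AllS)"
      unfolding trace_val_def Let_def J_def by (simp only: nwf if_False)
    show ?thesis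
      unfolding tv res using crit bs by simp
  qed
qed

lemma comp_app: "i \<in> {1..m} \<Longrightarrow> comp m l n f g i = seqv (f i) (g (idx (f i)))"
  unfolding comp_eq by simp
lemma comp_ext: "comp m l n f g \<in> extensional {1..m}"
  unfolding comp_eq by simp
lemma tensor_app1: "i \<in> {1..m} \<Longrightarrow> tensor m n m' n' f g i = f i"
  unfolding tensor_def by simp
lemma tensor_app2: "m < i \<Longrightarrow> i \<le> m + m' \<Longrightarrow> tensor m n m' n' f g i = shift n (g (i - m))"
  unfolding tensor_def by simp
lemma tensor_ext: "tensor m n m' n' f g \<in> extensional {1..m+m'}"
  unfolding tensor_def by simp
lemma ident_app: "i \<in> {1..m} \<Longrightarrow> ident m i = Idx i" unfolding ident_def by simp
lemma ident_ext: "ident m \<in> extensional {1..m}" unfolding ident_def by simp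
lemma sym_app1: "1 \<le> i \<Longrightarrow> i \<le> m \<Longrightarrow> sym m n i = Idx (n + i)" unfolding sym_def by simp
lemma sym_app2: "m < i \<Longrightarrow> i \<le> m + n \<Longrightarrow> sym m n i = Idx (i - m)" unfolding sym_def by simp
lemma sym_ext: "sym m n \<in> extensional {1..m+n}" unfolding sym_def by simp
lemma tr_ext: "tr l m n f \<in> extensional {1..m}" unfolding tr_def by simp

lemma inT_idx: "inT n v \<Longrightarrow> isix v \<Longrightarrow> idx v \<in> {1..n}" by (cases v) auto
lemma inT_I: "isix v \<Longrightarrow> idx v \<in> {1..n} \<Longrightarrow> inT n v" by (cases v) auto
lemma inT_nisix: "\<not> isix v \<Longrightarrow> inT n v" by (cases v) auto
lemma inT_seqv: "inT n y \<Longrightarrow> inT n (seqv x y)" by (cases x; cases y) auto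
lemma inT_mono: "inT n v \<Longrightarrow> n \<le> n' \<Longrightarrow> inT n' v" by (cases v) auto
lemma inT_shift: "inT d v \<Longrightarrow> inT (b + d) (shift b v)" by (cases v) auto
lemma isix_shift[simp]: "isix (shift b v) = isix v" by (cases v) auto
lemma idx_shift: "isix v \<Longrightarrow> idx (shift b v) = b + idx v" by (cases v) auto
lemma shift_seqv: "shift e (seqv y z) = seqv y (shift e z)" by (cases y; cases z) auto
lemma shift_shift: "shift b (shift d y) = shift (b + d) y" by (cases y) auto
lemma shift_0[simp]: "shift 0 y = y" by (cases y) auto
lemma seqv_isix: "isix (seqv x y) \<Longrightarrow> isix x \<and> isix y" by (cases x; cases y) auto
lemma seqv_Idx: "seqv x y = Idx k \<Longrightarrow> x = Idx (idx x) \<and> y = Idx k" by (cases x; cases y) auto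
lemma shift_Idx: "shift b y = Idx k \<Longrightarrow> y = Idx (idx y) \<and> k = b + idx y" by (cases y) auto
lemma seqv_same_lab: "seqv x y = seqv x' y" if "x = Idx (idx x) \<longleftrightarrow> x' = Idx (idx x')" "wt x = wt x'" "isix x" "isix x'"
  using that by (cases x; cases x'; cases y) auto

lemma arr_idx: "arr m n f \<Longrightarrow> i \<in> {1..m} \<Longrightarrow> isix (f i) \<Longrightarrow> idx (f i) \<in> {1..n}"
  by (rule inT_idx[OF arr_inT])

lemma arr_intro:
  assumes "\<And>i. i \<in> {1..m} \<Longrightarrow> inT n (f i)"
    and "\<And>i j k. i \<in> {1..m} \<Longrightarrow> j \<in> {1..m} \<Longrightarrow> f i = Idx k \<Longrightarrow> isix (f j) \<Longrightarrow> idx (f j) = k \<Longrightarrow> i = j"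
    and "f \<in> extensional {1..m}"
  shows "arr m n f"
  unfolding arr_def
proof (intro conjI)
  show "\<forall>i\<in>{1..m}. inT n (f i)" using assms(1) by blast
  show "f \<in> extensional {1..m}" by (rule assms(3))
  show "\<forall>i\<in>{1..m}. \<forall>j\<in>{1..m}. i \<noteq> j \<longrightarrow>
        (case f i of Idx k \<Rightarrow> f j \<noteq> Idx k \<and> (\<forall>r. f j \<noteq> Wt r k) | _ \<Rightarrow> True)"
  proof (intro ballI impI)
    fix i j assume i: "i \<in> {1..m}" and j: "j \<in> {1..m}" and ne: "i \<noteq> j"
    show "case f i of Idx k \<Rightarrow> f j \<noteq> Idx k \<and> (\<forall>r. f j \<noteq> Wt r k) | _ \<Rightarrow> True"
    proof (cases "f i")
      case (Idx k)
      have "\<not> (isix (f j) \<and> idx (f j) = k)" using assms(2)[OF i j Idx] ne by blast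
      then show ?thesis using Idx by auto
    qed auto
  qed
qed

lemma arr_comp: assumes f: "arr a b f" and g: "arr b c g" shows "arr a c (comp a b c f g)"
proof (rule arr_intro)
  fix i assume i: "i \<in> {1..a}"
  show "inT c (comp a b c f g i)"
  proof (cases "isix (f i)")
    case True
    then show ?thesis using comp_app[OF i] arr_idx[OF f i] arr_inT[OF g] inT_seqv by simp
  next
    case False
    then show ?thesis using comp_app[OF i] by (cases "f i") auto
  qed
next
  fix i j k assume i: "i \<in> {1..a}" and j: "j \<in> {1..a}" and e: "comp a b c f g i = Idx k"
    and x: "isix (comp a b c f g j)" and y: "idx (comp a b c f g j) = k"
  have ei: "f i = Idx (idx (f i))" "g (idx (f i)) = Idx k" using seqv_Idx e comp_app[OF i] by metis+
  have fj: "isix (f j)" "isix (g (idx (f j)))" using seqv_isix x comp_app[OF j] by metis+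
  have y2: "idx (g (idx (f j))) = k" using y unfolding comp_app[OF j] idx_seqv[OF fj(1)] .
  have fi: "isix (f i)" by (subst ei(1)) simp
  have d1: "idx (f i) \<in> {1..b}" using arr_idx[OF f i fi] .
  have d2: "idx (f j) \<in> {1..b}" using arr_idx[OF f j fj(1)] .
  have "idx (f i) = idx (f j)" using arr_real[OF g d1 d2 ei(2) fj(2) y2] .
  thus "i = j" using arr_real[OF f i j ei(1) fj(1)] by simp
qed (rule comp_ext)

lemma arr_ident: "arr a a (ident a)"
  by (rule arr_intro[OF _ _ ident_ext]) (auto simp: ident_app)

lemma comp_ident_left: "arr a b f \<Longrightarrow> comp a a b (ident a) f = f"
  by (rule extensionalityI[OF comp_ext arr_ext]) (auto simp: comp_app ident_app)

lemma comp_ident_right: assumes f: "arr a b f" shows "comp a b b f (ident b) = f"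
proof (rule extensionalityI[OF comp_ext arr_ext[OF f]])
  fix i assume i: "i \<in> {1..a}"
  show "comp a b b f (ident b) i = f i"
  proof (cases "isix (f i)")
    case True
    then show ?thesis using comp_app[OF i] ident_app[OF arr_idx[OF f i True]] seqv_self by simp
  next
    case False
    then show ?thesis using comp_app[OF i] by (cases "f i") auto
  qed
qed

lemma comp_assoc:
  assumes f: "arr a b f" and g: "arr b c g" and h: "arr c d h"
  shows "comp a c d (comp a b c f g) h = comp a b d f (comp b c d g h)"
proof (rule extensionalityI[OF comp_ext comp_ext])
  fix i assume i: "i \<in> {1..a}"
  show "comp a c d (comp a b c f g) h i = comp a b d f (comp b c d g h) i"
  proof (cases "isix (f i)")
    case True
    have j: "idx (f i) \<in> {1..b}" using arr_idx[OF f i True] .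
    show ?thesis unfolding comp_app[OF i] comp_app[OF j] by (subst idx_seqv[OF True]) (rule seqv_assoc)
  next
    case False
    then show ?thesis unfolding comp_app[OF i] by (cases "f i") auto
  qed
qed

lemma category: "is_category arr comp ident"
  unfolding is_category_def
  using arr_comp arr_ident comp_ident_left comp_ident_right comp_assoc by blast

lemma tensor_app: "i \<in> {1..m+m'} \<Longrightarrow> tensor m n m' n' f g i = (if i \<le> m then f i else shift n (g (i - m)))"
  unfolding tensor_def by simp

lemma arr_tensor:
  assumes f: "arr a b f" and g: "arr c d g"
  shows "arr (a+c) (b+d) (tensor a b c d f g)"
proof (rule arr_intro[OF _ _ tensor_ext])
  fix i assume i: "i \<in> {1..a+c}"
  show "inT (b+d) (tensor a b c d f g i)"
  proof (cases "i \<le> a")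
    case True
    hence "i \<in> {1..a}" using i by simp
    then show ?thesis using tensor_app[OF i] True inT_mono[OF arr_inT[OF f]] by simp
  next
    case False
    hence "i - a \<in> {1..c}" using i by auto
    then show ?thesis using tensor_app[OF i] False inT_shift[OF arr_inT[OF g]] by simp
  qed
next
  fix i j k assume i: "i \<in> {1..a+c}" and j: "j \<in> {1..a+c}"
    and e: "tensor a b c d f g i = Idx k" and x: "isix (tensor a b c d f g j)"
    and y: "idx (tensor a b c d f g j) = k"
  show "i = j"
  proof (cases "i \<le> a")
    case True
    hence i': "i \<in> {1..a}" using i by simp
    have fi: "f i = Idx k" using e tensor_app[OF i] True by simp
    have kb: "k \<in> {1..b}" using arr_idx[OF f i'] fi by (metis isix.simps(1) idx.simps(1))
    show ?thesis
    proof (cases "j \<le> a")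
      case True
      hence j': "j \<in> {1..a}" using j by simp
      show ?thesis using arr_real[OF f i' j' fi] x y tensor_app[OF j] True by simp
    next
      case False
      hence j': "j - a \<in> {1..c}" using j by auto
      have gx: "isix (g (j - a))" using x tensor_app[OF j] False by simp
      have "idx (tensor a b c d f g j) = b + idx (g (j - a))" using tensor_app[OF j] False idx_shift[OF gx] by simp
      moreover have "idx (g (j - a)) \<ge> 1" using arr_idx[OF g j' gx] by simp
      ultimately show ?thesis using y kb by simp
    qed
  next
    case False
    hence i': "i - a \<in> {1..c}" using i by auto
    have sh: "shift b (g (i - a)) = Idx k" using e tensor_app[OF i] False by simp
    hence gi: "g (i - a) = Idx (idx (g (i - a)))" "k = b + idx (g (i - a))" using shift_Idx by blast+
    have kb: "idx (g (i - a)) \<ge> 1" using arr_idx[OF g i'] gi(1) by (metis isix.simps(1) atLeastAtMost_iff)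
    show ?thesis
    proof (cases "j \<le> a")
      case True
      hence j': "j \<in> {1..a}" using j by simp
      have "idx (f j) \<le> b" using arr_idx[OF f j'] x y tensor_app[OF j] True by simp
      then show ?thesis using y tensor_app[OF j] True gi kb by simp
    next
      case False
      hence j': "j - a \<in> {1..c}" using j by auto
      have gx: "isix (g (j - a))" using x tensor_app[OF j] False by simp
      have "idx (g (j - a)) = idx (g (i - a))" using y gi(2) tensor_app[OF j] False idx_shift[OF gx] by simp
      hence "i - a = j - a" using arr_real[OF g i' j' gi(1) gx] by simp
      then show ?thesis using \<open>\<not> i \<le> a\<close> False by simp
    qed
  qed
qed

lemma tensor_ident: "tensor a a c c (ident a) (ident c) = ident (a+c)"
proof (rule extensionalityI[OF tensor_ext ident_ext])
  fix i assume i: "i \<in> {1..a+c}"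
  show "tensor a a c c (ident a) (ident c) i = ident (a+c) i"
  proof (cases "i \<le> a")
    case True
    then show ?thesis unfolding tensor_app[OF i] ident_app[OF i] using i by (simp add: ident_app)
  next
    case False
    hence "i - a \<in> {1..c}" using i by auto
    then show ?thesis unfolding tensor_app[OF i] ident_app[OF i] using False by (simp add: ident_app)
  qed
qed

lemma interchange:
  assumes f: "arr a b f" and f': "arr b e f'" and g: "arr c d g" and g': "arr d h g'"
  shows "comp (a+c) (b+d) (e+h) (tensor a b c d f g) (tensor b e d h f' g')
          = tensor a e c h (comp a b e f f') (comp c d h g g')"
proof (rule extensionalityI[OF comp_ext tensor_ext])
  fix i assume i: "i \<in> {1..a+c}"
  show "comp (a+c) (b+d) (e+h) (tensor a b c d f g) (tensor b e d h f' g') i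
          = tensor a e c h (comp a b e f f') (comp c d h g g') i"
  proof (cases "i \<le> a")
    case True
    hence i': "i \<in> {1..a}" using i by simp
    show ?thesis
    proof (cases "isix (f i)")
      case True
      have j: "idx (f i) \<in> {1..b}" using arr_idx[OF f i' True] .
      hence j2: "idx (f i) \<in> {1..b+d}" by simp
      show ?thesis unfolding comp_app[OF i] tensor_app[OF i] comp_app[OF i'] using \<open>i \<le> a\<close> j
        by (simp add: tensor_app[OF j2])
    next
      case False
      then show ?thesis unfolding comp_app[OF i] tensor_app[OF i] comp_app[OF i'] using \<open>i \<le> a\<close>
        by (cases "f i") auto
    qed
  next
    case False
    hence i': "i - a \<in> {1..c}" using i by auto
    show ?thesis
    proof (cases "isix (g (i - a))")
      case True
      have j: "idx (g (i - a)) \<in> {1..d}" using arr_idx[OF g i' True] .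
      have j2: "b + idx (g (i - a)) \<in> {1..b+d}" using j by simp
      have "seqv (shift b (g (i - a))) (tensor b e d h f' g' (b + idx (g (i - a))))
            = shift e (seqv (g (i - a)) (g' (idx (g (i - a)))))"
        unfolding tensor_app[OF j2] using j by (simp add: seqv_shift shift_seqv)
      then show ?thesis unfolding comp_app[OF i] tensor_app[OF i] comp_app[OF i'] using \<open>\<not> i \<le> a\<close>
        by (simp add: idx_shift[OF True])
    next
      case False
      then show ?thesis unfolding comp_app[OF i] tensor_app[OF i] comp_app[OF i'] using \<open>\<not> i \<le> a\<close>
        by (cases "g (i - a)") auto
    qed
  qed
qed

lemma tensor_assoc:
  assumes f: "arr a b f" and g: "arr c d g" and k: "arr e h k"
  shows "tensor (a+c) (b+d) e h (tensor a b c d f g) k = tensor a b (c+e) (d+h) f (tensor c d e h g k)"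
proof (rule extensionalityI[OF tensor_ext])
  show "tensor a b (c+e) (d+h) f (tensor c d e h g k) \<in> extensional {1..a+c+e}"
    using tensor_ext[of a b "c+e"] by (simp add: add.assoc)
  fix i assume i: "i \<in> {1..a+c+e}"
  have i2: "i \<in> {1..a+(c+e)}" using i by simp
  show "tensor (a+c) (b+d) e h (tensor a b c d f g) k i = tensor a b (c+e) (d+h) f (tensor c d e h g k) i"
  proof (cases "i \<le> a + c")
    case True
    hence i1: "i \<in> {1..a+c}" using i by simp
    show ?thesis
    proof (cases "i \<le> a")
      case False
      hence i3: "i - a \<in> {1..c+e}" and le: "i - a \<le> c" using True i by auto
      show ?thesis unfolding tensor_app[OF i] tensor_app[OF i1] tensor_app[OF i2] tensor_app[OF i3]
        by (simp only: True False le if_True if_False)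
    qed (simp add: tensor_app[OF i] tensor_app[OF i1] tensor_app[OF i2] True)
  next
    case False
    hence i3: "i - a \<in> {1..c+e}" and n1: "\<not> i \<le> a" and n2: "\<not> i - a \<le> c"
      and e: "i - a - c = i - (a + c)" using i by auto
    show ?thesis unfolding tensor_app[OF i] tensor_app[OF i2] tensor_app[OF i3]
      by (simp only: False n1 n2 e if_False shift_shift)
  qed
qed

lemma tensor_unit:
  assumes f: "arr a b f"
  shows "tensor 0 0 a b (ident 0) f = f \<and> tensor a b 0 0 f (ident 0) = f"
proof
  show "tensor 0 0 a b (ident 0) f = f"
    by (rule extensionalityI[OF _ arr_ext[OF f]]) (use tensor_ext[of 0 0 a b] in \<open>auto simp: tensor_app\<close>)
  show "tensor a b 0 0 f (ident 0) = f"
    by (rule extensionalityI[OF _ arr_ext[OF f]]) (use tensor_ext[of a b 0 0] in \<open>auto simp: tensor_app\<close>)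
qed

lemma strict_monoidal: "is_strict_monoidal arr comp ident tensor"
  unfolding is_strict_monoidal_def
  by (simp add: category arr_tensor tensor_ident interchange tensor_assoc tensor_unit)

lemma sym_app: "i \<in> {1..m+n} \<Longrightarrow> sym m n i = (if i \<le> m then Idx (n + i) else Idx (i - m))"
  unfolding sym_def by simp

lemma arr_sym: "arr (a+b) (b+a) (sym a b)"
proof (rule arr_intro[OF _ _ sym_ext])
  fix i assume i: "i \<in> {1..a+b}"
  show "inT (b+a) (sym a b i)" unfolding sym_app[OF i] using i by auto
next
  fix i j k assume i: "i \<in> {1..a+b}" and j: "j \<in> {1..a+b}"
    and e: "sym a b i = Idx k" and x: "isix (sym a b j)" and y: "idx (sym a b j) = k"
  show "i = j" using e y i j unfolding sym_app[OF i] sym_app[OF j]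
    by (auto split: if_splits)
qed

lemma sym_inv: "comp (a+b) (b+a) (a+b) (sym a b) (sym b a) = ident (a+b)"
proof (rule extensionalityI[OF comp_ext ident_ext])
  fix i assume i: "i \<in> {1..a+b}"
  show "comp (a+b) (b+a) (a+b) (sym a b) (sym b a) i = ident (a+b) i"
  proof (cases "i \<le> a")
    case True
    have j: "b + i \<in> {1..b+a}" using i True by auto
    show ?thesis unfolding comp_app[OF i] ident_app[OF i] sym_app[OF i] using True i
      by (simp add: sym_app[OF j])
  next
    case False
    have j: "i - a \<in> {1..b+a}" using i False by auto
    show ?thesis unfolding comp_app[OF i] ident_app[OF i] sym_app[OF i] using False i
      by (simp add: sym_app[OF j])
  qed
qed

lemma seqv_Idx_shift: "isix x \<Longrightarrow> seqv x (Idx (d + idx x)) = shift d x"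
  by (cases x) auto

lemma sym_natural:
  assumes f: "arr a b f" and g: "arr c d g"
  shows "comp (a+c) (b+d) (d+b) (tensor a b c d f g) (sym b d)
          = comp (a+c) (c+a) (d+b) (sym a c) (tensor c d a b g f)"
proof (rule extensionalityI[OF comp_ext comp_ext])
  fix i assume i: "i \<in> {1..a+c}"
  show "comp (a+c) (b+d) (d+b) (tensor a b c d f g) (sym b d) i
          = comp (a+c) (c+a) (d+b) (sym a c) (tensor c d a b g f) i"
  proof (cases "i \<le> a")
    case True
    hence i': "i \<in> {1..a}" using i by simp
    have ci: "c + i \<in> {1..c+a}" "\<not> c + i \<le> c" "c + i - c = i" using i' by auto
    have R: "comp (a+c) (c+a) (d+b) (sym a c) (tensor c d a b g f) i = shift d (f i)"
      unfolding comp_app[OF i] sym_app[OF i] using True i' by (simp add: tensor_app[OF ci(1)] ci)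
    show ?thesis
    proof (cases "isix (f i)")
      case True
      have j: "idx (f i) \<in> {1..b+d}" "idx (f i) \<le> b" using arr_idx[OF f i' True] by auto
      show ?thesis unfolding R unfolding comp_app[OF i] tensor_app[OF i] using \<open>i \<le> a\<close>
        by (simp add: sym_app[OF j(1)] j(2) seqv_Idx_shift[OF True])
    next
      case False
      then show ?thesis unfolding R unfolding comp_app[OF i] tensor_app[OF i] using \<open>i \<le> a\<close>
        by (cases "f i") auto
    qed
  next
    case False
    hence i': "i - a \<in> {1..c}" using i by auto
    hence ci: "i - a \<in> {1..c+a}" "i - a \<le> c" by auto
    have R: "comp (a+c) (c+a) (d+b) (sym a c) (tensor c d a b g f) i = g (i - a)"
      unfolding comp_app[OF i] sym_app[OF i] using False by (simp add: tensor_app[OF ci(1)] ci)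
    show ?thesis
    proof (cases "isix (g (i - a))")
      case True
      have j: "idx (g (i - a)) \<in> {1..d}" using arr_idx[OF g i' True] .
      hence j2: "b + idx (g (i - a)) \<in> {1..b+d}" "\<not> b + idx (g (i - a)) \<le> b" by auto
      have e: "b + idx (g (i - a)) - b = idx (g (i - a))" by simp
      show ?thesis unfolding R unfolding comp_app[OF i] tensor_app[OF i] using \<open>\<not> i \<le> a\<close>
        by (simp only: if_False idx_shift[OF True] sym_app[OF j2(1)] j2(2) e seqv_shift seqv_self[OF True])
    next
      case False
      then show ?thesis unfolding R unfolding comp_app[OF i] tensor_app[OF i] using \<open>\<not> i \<le> a\<close>
        by (cases "g (i - a)") auto
    qed
  qed
qed

lemma hexagon:
  "sym a (b+c) = comp (a+b+c) (b+a+c) (b+c+a) (tensor (a+b) (b+a) c c (sym a b) (ident c))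
                                    (tensor b b (a+c) (c+a) (ident b) (sym a c))"
proof (rule extensionalityI[OF _ comp_ext])
  show "sym a (b+c) \<in> extensional {1..a+b+c}" using sym_ext[of a "b+c"] by (simp add: add.assoc)
  fix i assume i: "i \<in> {1..a+b+c}"
  have i0: "i \<in> {1..a+(b+c)}" using i by simp
  show "sym a (b+c) i = comp (a+b+c) (b+a+c) (b+c+a) (tensor (a+b) (b+a) c c (sym a b) (ident c))
                                    (tensor b b (a+c) (c+a) (ident b) (sym a c)) i"
  proof (cases "i \<le> a")
    case True
    have i1: "i \<in> {1..a+b}" using i True by auto
    have j: "b + i \<in> {1..b+(a+c)}" "\<not> b + i \<le> b" "i \<in> {1..a+c}" "i \<le> a" using i True by auto
    show ?thesis unfolding comp_app[OF i] sym_app[OF i0] tensor_app[OF i] sym_app[OF i1]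
      using True i1 by (simp add: tensor_app[OF j(1)] j(2) sym_app[OF j(3)] j(4))
  next
    case False
    show ?thesis
    proof (cases "i \<le> a + b")
      case True
      have i1: "i \<in> {1..a+b}" using i True by auto
      have j: "i - a \<in> {1..b+(a+c)}" "i - a \<le> b" "i - a \<in> {1..b}" using i True False by auto
      show ?thesis unfolding comp_app[OF i] sym_app[OF i0] tensor_app[OF i] sym_app[OF i1]
        using True False by (simp add: tensor_app[OF j(1)] j(2) ident_app[OF j(3)])
    next
      case False2: False
      have k: "i - (a + b) \<in> {1..c}" using i False2 by auto
      have j: "i \<in> {1..b+(a+c)}" "\<not> i \<le> b" "i - b \<in> {1..a+c}" "\<not> i - b \<le> a" using i False2 by auto
      have e1: "b + a + (i - (a + b)) = i" using False2 by simp
      have e2: "b + (i - b - a) = i - a" using False2 by simp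
      show ?thesis unfolding comp_app[OF i] sym_app[OF i0] tensor_app[OF i]
        using False False2 by (simp add: ident_app[OF k] e1 tensor_app[OF j(1)] j(2) sym_app[OF j(3)] j(4) e2)
    qed
  qed
qed

lemma symmetric_monoidal: "is_symmetric_monoidal arr comp ident tensor sym"
  unfolding is_symmetric_monoidal_def
  by (simp add: strict_monoidal arr_sym sym_inv sym_natural hexagon)

lemma tr_app: "arr (l+a) (l+n) f \<Longrightarrow> i \<in> {1..a} \<Longrightarrow> tr l a n f i = unsh l (res l f (f (l+i)))"
  unfolding tr_def using TV by simp

lemma res_inT:
  assumes F: "\<forall>y\<in>{1..l}. inT N (F y)" and w: "inT N w"
  shows "inT N (res l F w)"
  using w
proof (induction w rule: res_induct[where l = l and F = F])
  case (1 w) then show ?case using res_nc by simp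
next
  case (2 w)
  have "idx w \<in> {1..l}" using cont_idx[OF 2(1)] .
  hence "inT N (F (idx w))" using F by blast
  then show ?case using 2 res_cont[OF 2(1)] inT_seqv by simp
next
  case (3 w) then show ?case using res_nstops[OF 3(1)] by simp
qed

lemma res_ncont: "\<not> cont l (res l F w)"
proof (induction w rule: res_induct[where l = l and F = F])
  case (1 w) then show ?case using res_nc by simp
next
  case (2 w) then show ?case using res_cont[OF 2(1)] cont_seqv[OF cont_isix[OF 2(1)]] by simp
next
  case (3 w) then show ?case using res_nstops[OF 3(1)] by simp
qed

lemma unsh_inT: "inT (l+b) v \<Longrightarrow> \<not> cont l v \<Longrightarrow> inT b (unsh l v)"
  by (cases v) auto

definition Src where "Src l F v = insert v {idx (path F (F v) t) | t. t < st l F (F v)}"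

lemma Src_nc: "\<not> cont l (F u) \<Longrightarrow> Src l F u = {u}"
proof -
  assume a: "\<not> cont l (F u)"
  have "st l F (F u) = 0" unfolding st_def using a by (metis (mono_tags, lifting) Least_eq_0 path.simps(1))
  thus ?thesis unfolding Src_def by simp
qed

lemma Src_cont:
  assumes c: "cont l (F u)" and s: "stops l F (F u)"
  shows "Src l F u = insert u (Src l F (idx (F u)))"
proof -
  let ?x = "idx (F u)"
  have st: "st l F (F u) = Suc (st l F (F ?x))" using st_Suc[OF c s] .
  have "{idx (path F (F u) t) | t. t < Suc (st l F (F ?x))}
        = insert ?x {idx (path F (F ?x) t) | t. t < st l F (F ?x)}"
  proof
    show "{idx (path F (F u) t) | t. t < Suc (st l F (F ?x))} \<subseteq> insert ?x {idx (path F (F ?x) t) | t. t < st l F (F ?x)}"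
    proof
      fix z assume "z \<in> {idx (path F (F u) t) | t. t < Suc (st l F (F ?x))}"
      then obtain t where t: "z = idx (path F (F u) t)" "t < Suc (st l F (F ?x))" by blast
      show "z \<in> insert ?x {idx (path F (F ?x) t) | t. t < st l F (F ?x)}"
      proof (cases t)
        case 0 then show ?thesis using t by simp
      next
        case (Suc t') then show ?thesis using t path_Suc'[of F "F u" t'] by auto
      qed
    qed
    show "insert ?x {idx (path F (F ?x) t) | t. t < st l F (F ?x)} \<subseteq> {idx (path F (F u) t) | t. t < Suc (st l F (F ?x))}"
    proof
      fix z assume z: "z \<in> insert ?x {idx (path F (F ?x) t) | t. t < st l F (F ?x)}"
      show "z \<in> {idx (path F (F u) t) | t. t < Suc (st l F (F ?x))}"
      proof (cases "z = ?x")
        case True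
        then show ?thesis by (intro CollectI exI[of _ 0]) simp
      next
        case False
        then obtain t where t: "z = idx (path F (F ?x) t)" "t < st l F (F ?x)" using z by blast
        then show ?thesis using path_Suc'[of F "F u" t] by (intro CollectI exI[of _ "Suc t"]) simp
      qed
    qed
  qed
  thus ?thesis unfolding Src_def st by simp
qed

lemma Src_path:
  "t < st l F (F v) \<Longrightarrow> \<exists>w\<in>Src l F v. path F (F v) t = F w"
proof (induction t)
  case 0 then show ?case unfolding Src_def by auto
next
  case (Suc t)
  have "idx (path F (F v) t) \<in> Src l F v" unfolding Src_def using Suc.prems by auto
  then show ?case by auto
qed

lemma Src_elem: "z \<in> Src l F v \<Longrightarrow> z = v \<or> z \<in> {1..l}"
  unfolding Src_def using stops_st_less cont_idx by blast

lemma res_isix_stops: "isix (res l F w) \<Longrightarrow> stops l F w"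
proof (rule ccontr)
  assume "isix (res l F w)" "\<not> stops l F w"
  thus False using res_nstops[of l F w] by (cases "nb F w") auto
qed

lemma res_plain_stops: "res l F w = Idx e \<Longrightarrow> stops l F w"
  using res_isix_stops[of l F w] by simp

lemma trace_real_aux:
  assumes f: "arr (l+a) (l+b) f"
  shows "\<forall>u v. st l f (f u) + st l f (f v) = n \<longrightarrow> u \<in> {1..l+a} \<longrightarrow> v \<in> {1..l+a} \<longrightarrow>
    res l f (f u) = Idx e \<longrightarrow> isix (res l f (f v)) \<longrightarrow> idx (res l f (f v)) = e \<longrightarrow>
    stops l f (f v) \<longrightarrow> u \<in> Src l f v \<or> v \<in> Src l f u"
proof (induction n rule: less_induct)
  case (less n)
  show ?case
  proof (intro allI impI)
    fix u v assume n: "st l f (f u) + st l f (f v) = n" and u: "u \<in> {1..l+a}" and v: "v \<in> {1..l+a}"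
      and eu: "res l f (f u) = Idx e" and xv: "isix (res l f (f v))" and yv: "idx (res l f (f v)) = e"
      and sv: "stops l f (f v)"
    have su: "stops l f (f u)" using res_plain_stops[OF eu] .
    show "u \<in> Src l f v \<or> v \<in> Src l f u"
    proof (cases "cont l (f u)")
      case True
      let ?x = "idx (f u)"
      have x: "?x \<in> {1..l}" using cont_idx[OF True] .
      have ru: "seqv (f u) (res l f (f ?x)) = Idx e" using eu res_cont[OF True] by simp
      have fu: "f u = Idx ?x" and rx: "res l f (f ?x) = Idx e" using seqv_Idx[OF ru] by auto
      have sx: "stops l f (f ?x)" using stops_Suc[OF True] su by simp
      have lt: "st l f (f ?x) + st l f (f v) < n" using st_Suc[OF True su] n by simp
      have IH: "?x \<in> Src l f v \<or> v \<in> Src l f ?x"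
        using less.IH[OF lt] x v rx xv yv sv by auto
      have SU: "Src l f u = insert u (Src l f ?x)" using Src_cont[OF True su] .
      show ?thesis
      proof (cases "v \<in> Src l f ?x")
        case True then show ?thesis using SU by simp
      next
        case False
        hence xin: "?x \<in> Src l f v" using IH by simp
        show ?thesis
        proof (cases "?x = v")
          case True then show ?thesis using SU unfolding Src_def by auto
        next
          case False
          then obtain t where t: "?x = idx (path f (f v) t)" "t < st l f (f v)"
            using xin unfolding Src_def by blast
          obtain w where w: "w \<in> Src l f v" "path f (f v) t = f w" using Src_path[OF t(2)] by blast
          have wd: "w \<in> {1..l+a}" using Src_elem[OF w(1)] v by auto
          have "isix (f w)" using stops_st_less[OF t(2)] w(2) cont_isix by metis
          hence "u = w" using arr_real[OF f u wd fu] t(1) w(2) by simp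
          then show ?thesis using w(1) by simp
        qed
      qed
    next
      case False
      have fu: "f u = Idx e" using eu res_nc[OF False] by simp
      show ?thesis
      proof (cases "cont l (f v)")
        case False
        have "u = v" using arr_real[OF f u v fu] xv yv res_nc[OF False] by simp
        then show ?thesis unfolding Src_def by simp
      next
        case True
        let ?y = "idx (f v)"
        have y: "?y \<in> {1..l}" using cont_idx[OF True] .
        have rv: "res l f (f v) = seqv (f v) (res l f (f ?y))" using res_cont[OF True] .
        have fvx: "isix (f v)" using cont_isix[OF True] .
        have xy: "isix (res l f (f ?y))" "idx (res l f (f ?y)) = e"
          using xv yv rv isix_seqv[OF fvx] idx_seqv[OF fvx] by auto
        have sy: "stops l f (f ?y)" using stops_Suc[OF True] sv by simp
        have lt: "st l f (f u) + st l f (f ?y) < n" using st_Suc[OF True sv] n by simp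
        have IH: "u \<in> Src l f ?y \<or> ?y \<in> Src l f u"
          using less.IH[OF lt] u y eu xy sy by auto
        have SV: "Src l f v = insert v (Src l f ?y)" using Src_cont[OF True sv] .
        have SU: "Src l f u = {u}" using Src_nc[of l f u] False by simp
        show ?thesis using IH SV SU unfolding Src_def by auto
      qed
    qed
  qed
qed

lemma arr_tr:
  assumes f: "arr (l+a) (l+b) f"
  shows "arr a b (tr l a b f)"
proof (rule arr_intro[OF _ _ tr_ext])
  have F: "\<forall>y\<in>{1..l}. inT (l+b) (f y)" using arr_inT[OF f] by auto
  fix i assume i: "i \<in> {1..a}"
  have "inT (l+b) (f (l+i))" using arr_inT[OF f] i by simp
  hence "inT (l+b) (res l f (f (l+i)))" using res_inT[OF F] by blast
  thus "inT b (tr l a b f i)" unfolding tr_app[OF f i] using unsh_inT res_ncont by blast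
next
  fix i j k assume i: "i \<in> {1..a}" and j: "j \<in> {1..a}" and e: "tr l a b f i = Idx k"
    and x: "isix (tr l a b f j)" and y: "idx (tr l a b f j) = k"
  let ?ri = "res l f (f (l+i))" and ?rj = "res l f (f (l+j))"
  have ri: "?ri = Idx (l + k)"
  proof -
    have "inT (l+b) ?ri" using res_inT arr_inT[OF f] i by auto
    moreover have "\<not> cont l ?ri" using res_ncont .
    ultimately show ?thesis using e unfolding tr_app[OF f i] by (cases ?ri) auto
  qed
  have rj: "isix ?rj" "idx ?rj = l + k"
  proof -
    have "inT (l+b) ?rj" using res_inT arr_inT[OF f] j by auto
    moreover have "\<not> cont l ?rj" using res_ncont .
    ultimately show "isix ?rj" "idx ?rj = l + k" using x y unfolding tr_app[OF f j] by (cases ?rj; auto)+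
  qed
  have sj: "stops l f (f (l+j))" using res_isix_stops[OF rj(1)] .
  have "l+i \<in> Src l f (l+j) \<or> l+j \<in> Src l f (l+i)"
    using trace_real_aux[OF f] i j ri rj sj by auto
  thus "i = j"
  proof
    assume "l+i \<in> Src l f (l+j)" thus "i = j" using Src_elem[of "l+i" l f "l+j"] i by auto
  next
    assume "l+j \<in> Src l f (l+i)" thus "i = j" using Src_elem[of "l+j" l f "l+i"] j by auto
  qed
qed

lemma path_eq_post:
  assumes agree: "\<forall>y\<in>{1..l}. F y = post (G y)" and pc: "\<forall>z. cont l z \<longrightarrow> post z = z"
    and ns: "\<not> stops l G w"
  shows "path F (post w) t = path G w t"
proof (induction t)
  case 0 then show ?case using pc nstops[OF ns, of 0] by simp
next
  case (Suc t)
  have c: "cont l (path G w t)" "cont l (G (idx (path G w t)))" using nstops[OF ns, of t] nstops[OF ns, of "Suc t"] by auto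
  have "F (idx (path G w t)) = post (G (idx (path G w t)))" using agree cont_idx[OF c(1)] by blast
  also have "\<dots> = G (idx (path G w t))" using pc c(2) by simp
  finally show ?case using Suc by simp
qed

lemma res_post:
  assumes agree: "\<forall>y\<in>{1..l}. F y = post (G y)" and dom: "\<forall>y\<in>{1..l}. inT N (G y)"
    and pc: "\<forall>z. cont l z \<longrightarrow> post z = z"
    and pn: "\<forall>z. inT N z \<longrightarrow> \<not> cont l z \<longrightarrow> \<not> cont l (post z)"
    and ps: "\<forall>z y. isix z \<longrightarrow> post (seqv z y) = seqv z (post y)"
    and pE: "post ExS = ExS" "post AllS = AllS"
  shows "inT N w \<Longrightarrow> res l F (post w) = post (res l G w)"
proof (induction w rule: res_induct[where l = l and F = G])
  case (1 w)
  then show ?case using res_nc[OF 1(1)] res_nc[of l "post w" F] pn by simp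
next
  case (2 w)
  have x: "idx w \<in> {1..l}" using cont_idx[OF 2(1)] .
  have IH: "res l F (post (G (idx w))) = post (res l G (G (idx w)))" using 2(3) dom x by blast
  have "res l F (post w) = res l F w" using pc 2(1) by simp
  also have "\<dots> = seqv w (res l F (F (idx w)))" using res_cont[OF 2(1)] .
  also have "\<dots> = seqv w (post (res l G (G (idx w))))" using IH agree x by simp
  also have "\<dots> = post (seqv w (res l G (G (idx w))))" using ps cont_isix[OF 2(1)] by simp
  also have "\<dots> = post (res l G w)" using res_cont[OF 2(1)] by simp
  finally show ?case .
next
  case (3 w)
  have pe: "path F (post w) = path G w" using path_eq_post[OF agree pc 3(1)] by blast
  have "res l F (post w) = res l G w"
    unfolding res_def stops_def st_def nb_def PS_def pe by simp
  then show ?case using res_nstops[OF 3(1)] pE by simp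
qed

lemma unsh_0[simp]: "unsh 0 v = v" by (cases v) auto

lemma trace_vanish0: assumes f: "arr a b f" shows "tr 0 a b f = f"
proof (rule extensionalityI[OF tr_ext arr_ext[OF f]])
  fix i assume i: "i \<in> {1..a}"
  have f0: "arr (0+a) (0+b) f" using f by simp
  show "tr 0 a b f i = f i" unfolding tr_app[OF f0 i] using res_nc[of 0 "f i" f] by (cases "f i") auto
qed

lemma trace_yank: "tr l l l (sym l l) = ident l"
proof (rule extensionalityI[OF tr_ext ident_ext])
  fix i assume i: "i \<in> {1..l}"
  have s: "arr (l+l) (l+l) (sym l l)" using arr_sym .
  have a: "l + i \<in> {1..l+l}" "i \<in> {1..l+l}" using i by auto
  have e1: "sym l l (l+i) = Idx i" using sym_app[OF a(1)] i by simp
  have e2: "sym l l i = Idx (l+i)" using sym_app[OF a(2)] i by simp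
  have "res l (sym l l) (Idx i) = seqv (Idx i) (res l (sym l l) (Idx (l+i)))"
    using res_cont[of l "Idx i" "sym l l"] i e2 by simp
  also have "\<dots> = Idx (l+i)" using res_nc[of l "Idx (l+i)" "sym l l"] i by simp
  finally show "tr l l l (sym l l) i = ident l i" unfolding tr_app[OF s i] e1 ident_app[OF i] by simp
qed

lemma unsh_shift_add: "unsh l (shift (l + b) v) = shift b v" by (cases v) auto
lemma ncont_shift: "inT d v \<Longrightarrow> \<not> cont l (shift (l + b) v)" by (cases v) auto

lemma trace_superpose:
  assumes f: "arr (l+a) (l+b) f" and g: "arr c d g"
  shows "tr l (a+c) (b+d) (tensor (l+a) (l+b) c d f g) = tensor a b c d (tr l a b f) g"
proof (rule extensionalityI[OF tr_ext tensor_ext])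
  let ?T = "tensor (l+a) (l+b) c d f g"
  have T: "arr (l+(a+c)) (l+(b+d)) ?T" using arr_tensor[OF f g] by (simp add: add.assoc)
  fix i assume i: "i \<in> {1..a+c}"
  have li: "l + i \<in> {1..l+a+c}" using i by auto
  show "tr l (a+c) (b+d) ?T i = tensor a b c d (tr l a b f) g i"
  proof (cases "i \<le> a")
    case True
    hence i': "i \<in> {1..a}" using i by simp
    have agree: "\<forall>y\<in>{1..l}. ?T y = id (f y)" using tensor_app by auto
    have dom: "\<forall>y\<in>{1..l}. inT (l+b) (f y)" using arr_inT[OF f] by auto
    have w: "inT (l+b) (f (l+i))" using arr_inT[OF f] i' by simp
    have "res l ?T (id (f (l+i))) = id (res l f (f (l+i)))"
      by (rule res_post[OF agree dom _ _ _ _ _ w]) auto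
    moreover have "?T (l+i) = f (l+i)" using tensor_app[OF li] True by simp
    ultimately show ?thesis unfolding tr_app[OF T i] tensor_app[OF i] tr_app[OF f i'] using True by simp
  next
    case False
    have "?T (l+i) = shift (l+b) (g (i - a))" using tensor_app[OF li] False by simp
    moreover have "i - a \<in> {1..c}" using i False by auto
    hence "inT d (g (i - a))" using arr_inT[OF g] by blast
    ultimately show ?thesis unfolding tr_app[OF T i] tensor_app[OF i] using False res_nc ncont_shift unsh_shift_add
      by simp
  qed
qed

lemma unsh_seqv_shift: "unsh l (seqv R (shift l Y)) = seqv R Y"
  by (cases R; cases Y) auto

lemma trace_tighten:
  assumes g: "arr a' a g" and f: "arr (l+a) (l+b) f" and h: "arr b b' h"
  shows "tr l a' b' (comp (l+a') (l+b) (l+b')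
                       (comp (l+a') (l+a) (l+b) (tensor l l a' a (ident l) g) f)
                       (tensor l l b b' (ident l) h))
          = comp a' b b' (comp a' a b g (tr l a b f)) h"
proof -
  let ?Tg = "tensor l l a' a (ident l) g"
  let ?C = "comp (l+a') (l+a) (l+b) ?Tg f"
  let ?H = "tensor l l b b' (ident l) h"
  let ?F = "comp (l+a') (l+b) (l+b') ?C ?H"
  define post where "post z = seqv z (?H (idx z))" for z
  have Tg: "arr (l+a') (l+a) ?Tg" using arr_tensor[OF arr_ident g] .
  have C: "arr (l+a') (l+b) ?C" using arr_comp[OF Tg f] .
  have H: "arr (l+b) (l+b') ?H" using arr_tensor[OF arr_ident h] .
  have F: "arr (l+a') (l+b') ?F" using arr_comp[OF C H] .
  have Hl: "?H y = Idx y" if "y \<in> {1..l}" for y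
    using that tensor_app[of y l b l b' "ident l" h] ident_app[OF that] by simp
  have Hr: "?H y = shift l (h (y - l))" if "y \<in> {1..l+b}" "\<not> y \<le> l" for y
    using that tensor_app[of y l b l b' "ident l" h] by simp
  have agree: "\<forall>y\<in>{1..l}. ?F y = post (f y)"
  proof
    fix y assume y: "y \<in> {1..l}"
    hence y1: "y \<in> {1..l+a'}" by simp
    have "?Tg y = Idx y" using tensor_app[OF y1] ident_app[OF y] y by simp
    hence "?C y = f y" using comp_app[OF y1] by simp
    thus "?F y = post (f y)" unfolding post_def comp_app[OF y1] by simp
  qed
  have dom: "\<forall>y\<in>{1..l}. inT (l+b) (f y)" using arr_inT[OF f] by auto
  have pc: "\<forall>z. cont l z \<longrightarrow> post z = z"
    unfolding post_def using Hl cont_idx seqv_self cont_isix by metis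
  have pn: "\<forall>z. inT (l+b) z \<longrightarrow> \<not> cont l z \<longrightarrow> \<not> cont l (post z)"
  proof (intro allI impI)
    fix z assume z: "inT (l+b) z" "\<not> cont l z"
    show "\<not> cont l (post z)"
    proof (cases "isix z")
      case True
      have iz: "idx z \<in> {1..l+b}" "\<not> idx z \<le> l" using inT_idx[OF z(1) True] z(2) isix_idx_cont[OF True] by auto
      hence "idx z - l \<in> {1..b}" by auto
      hence hi: "inT b' (h (idx z - l))" using arr_inT[OF h] by blast
      have "post z = seqv z (shift l (h (idx z - l)))" unfolding post_def using Hr[OF iz] by simp
      thus ?thesis using hi cont_seqv[OF True] by (cases "h (idx z - l)") auto
    next
      case False
      then show ?thesis unfolding post_def using z by (cases z) auto
    qed
  qed
  have ps: "\<forall>z y. isix z \<longrightarrow> post (seqv z y) = seqv z (post y)"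
    unfolding post_def using idx_seqv seqv_assoc by simp
  have pE: "post ExS = ExS" "post AllS = AllS" unfolding post_def by simp_all
  have RP: "inT (l+b) w \<Longrightarrow> res l ?F (post w) = post (res l f w)" for w
    using res_post[OF agree dom pc pn ps pE] by blast
  show ?thesis
  proof (rule extensionalityI[OF tr_ext comp_ext])
    fix i assume i: "i \<in> {1..a'}"
    have li: "l + i \<in> {1..l+a'}" using i by auto
    have Tgi: "?Tg (l+i) = shift l (g i)" using tensor_app[OF li] i by simp
    show "tr l a' b' ?F i = comp a' b b' (comp a' a b g (tr l a b f)) h i"
    proof (cases "isix (g i)")
      case False
      have "?F (l+i) = g i" unfolding comp_app[OF li] Tgi using False by (cases "g i") auto
      moreover have "comp a' b b' (comp a' a b g (tr l a b f)) h i = g i"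
        unfolding comp_app[OF i] using False by (cases "g i") auto
      ultimately show ?thesis unfolding tr_app[OF F i] using res_nc[of l "g i"] False by (cases "g i") auto
    next
      case True
      define j where "j = idx (g i)"
      have j: "j \<in> {1..a}" unfolding j_def using arr_idx[OF g i True] .
      have lj: "idx (shift l (g i)) = l + j" unfolding j_def using idx_shift[OF True] .
      define R where "R = res l f (f (l+j))"
      have wj: "inT (l+b) (f (l+j))" using arr_inT[OF f] j by simp
      have Rin: "inT (l+b) R" unfolding R_def using res_inT[OF dom wj] .
      have Rnc: "\<not> cont l R" unfolding R_def using res_ncont .
      have trj: "tr l a b f j = unsh l R" unfolding R_def using tr_app[OF f j] .
      have Fi: "?F (l+i) = seqv (shift l (g i)) (post (f (l+j)))"
      proof -
        have "?C (l+i) = seqv (shift l (g i)) (f (l+j))" unfolding comp_app[OF li] Tgi lj ..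
        hence "?F (l+i) = post (seqv (shift l (g i)) (f (l+j)))" unfolding comp_app[OF li] post_def by simp
        thus ?thesis using ps True by simp
      qed
      have L: "tr l a' b' ?F i = seqv (g i) (unsh l (post R))"
        unfolding tr_app[OF F i] Fi res_prefix[OF isix_shift[THEN iffD2, OF True]] RP[OF wj] R_def[symmetric]
        by (simp add: unsh_seqv[OF True] seqv_shift)
      show ?thesis
      proof (cases "isix R")
        case True
        have iR: "idx R \<in> {1..l+b}" "\<not> idx R \<le> l" using inT_idx[OF Rin True] Rnc isix_idx_cont[OF True] by auto
        have pR: "post R = seqv R (shift l (h (idx R - l)))" unfolding post_def using Hr[OF iR] by simp
        have uR: "isix (unsh l R)" "idx (unsh l R) = idx R - l" using True by (cases R; auto)+
        have "comp a' b b' (comp a' a b g (tr l a b f)) h i = seqv (seqv (g i) (unsh l R)) (h (idx R - l))"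
          unfolding comp_app[OF i] j_def[symmetric] trj using idx_seqv[OF \<open>isix (g i)\<close>] uR(2) by simp
        also have "\<dots> = seqv (g i) (seqv R (h (idx R - l)))" by (simp add: seqv_assoc seqv_unsh)
        finally show ?thesis unfolding L pR unsh_seqv_shift by simp
      next
        case False
        have pR: "post R = R" unfolding post_def using False by (cases R) auto
        have "comp a' b b' (comp a' a b g (tr l a b f)) h i = seqv (g i) R"
          unfolding comp_app[OF i] j_def[symmetric] trj using False \<open>isix (g i)\<close>
          by (cases R; cases "g i") auto
        then show ?thesis unfolding L pR using False by (cases R) auto
      qed
    qed
  qed
qed

lemma nb_pert:
  fixes A G :: "nat \<Rightarrow> real"
  assumes "\<And>J. \<bar>A J - G (Suc J)\<bar> \<le> M" "G 0 = 0"
  shows "(\<exists>B. \<forall>N. B \<le> A N) \<longleftrightarrow> (\<exists>B. \<forall>N. B \<le> G N)"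
proof
  assume "\<exists>B. \<forall>N. B \<le> A N" then obtain B where B: "\<And>N. B \<le> A N" by auto
  have "min 0 (B - M) \<le> G N" for N
  proof (cases N)
    case (Suc J)
    have "B - M \<le> G (Suc J)" using B[of J] assms(1)[of J] unfolding abs_le_iff by linarith
    then show ?thesis using Suc by (simp add: min_le_iff_disj)
  qed (use assms(2) in simp)
  thus "\<exists>B. \<forall>N. B \<le> G N" by blast
next
  assume "\<exists>B. \<forall>N. B \<le> G N" then obtain B where B: "\<And>N. B \<le> G N" by auto
  have "B - M \<le> A N" for N using B[of "Suc N"] assms(1)[of N] by (simp add: abs_le_iff)
  thus "\<exists>B. \<forall>N. B \<le> A N" by blast
qed

lemma trace_slide:
  assumes f: "arr (l+a) (l'+b) f" and k: "arr l' l k"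
  shows "tr l a b (comp (l+a) (l'+b) (l+b) f (tensor l' l b b k (ident b)))
       = tr l' a b (comp (l'+a) (l+a) (l'+b) (tensor l' l a a k (ident a)) f)"
proof -
  let ?K1 = "tensor l' l b b k (ident b)"
  let ?K2 = "tensor l' l a a k (ident a)"
  let ?F1 = "comp (l+a) (l'+b) (l+b) f ?K1"
  let ?F2 = "comp (l'+a) (l+a) (l'+b) ?K2 f"
  define pk where "pk z = seqv z (?K1 (idx z))" for z
  have K1: "arr (l'+b) (l+b) ?K1" using arr_tensor[OF k arr_ident] .
  have K2: "arr (l'+a) (l+a) ?K2" using arr_tensor[OF k arr_ident] .
  have F1: "arr (l+a) (l+b) ?F1" using arr_comp[OF f K1] .
  have F2: "arr (l'+a) (l'+b) ?F2" using arr_comp[OF K2 f] .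
  have F1e: "?F1 x = pk (f x)" if "x \<in> {1..l+a}" for x unfolding pk_def comp_app[OF that] ..
  have K1l: "?K1 y = k y" if "y \<in> {1..l'}" for y using that tensor_app[of y l' b l b k "ident b"] by simp
  have K1r: "?K1 y = Idx (l + (y - l'))" if "y \<in> {1..l'+b}" "\<not> y \<le> l'" for y
  proof -
    have "y - l' \<in> {1..b}" using that by auto
    thus ?thesis using that tensor_app[of y l' b l b k "ident b"] ident_app[of "y - l'" b] by simp
  qed
  have F2l: "?F2 y = seqv (k y) (f (idx (k y)))" if "y \<in> {1..l'}" for y
  proof -
    have y1: "y \<in> {1..l'+a}" using that by simp
    show ?thesis unfolding comp_app[OF y1] using tensor_app[OF y1] that by simp
  qed
  have pk_seqv: "pk (seqv z y) = seqv z (pk y)" if "isix z" for z y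
    unfolding pk_def using idx_seqv[OF that] seqv_assoc by simp
  have S: "inT (l'+b) w \<Longrightarrow> unsh l (res l ?F1 (pk w)) = unsh l' (res l' ?F2 w)" for w
  proof (induction w rule: res_induct[where l = l' and F = ?F2])
    case (1 w)
    show ?case
    proof (cases "isix w")
      case True
      have iw: "idx w \<in> {1..l'+b}" "\<not> idx w \<le> l'" using inT_idx[OF 1(2) True] 1(1) isix_idx_cont[OF True] by auto
      have pw: "pk w = seqv w (Idx (l + (idx w - l')))" unfolding pk_def using K1r[OF iw] by simp
      have nc: "\<not> cont l (pk w)" unfolding pw using True iw by (cases w) auto
      show ?thesis unfolding res_nc[OF nc] res_nc[OF 1(1)] unfolding pw using True iw by (cases w) auto
    next
      case False
      hence "pk w = w" unfolding pk_def by (cases w) auto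
      then show ?thesis using False res_nc[OF 1(1)] res_nc[of l w] by (cases w) auto
    qed
  next
    case (2 w)
    let ?y = "idx w"
    have y: "?y \<in> {1..l'}" using cont_idx[OF 2(1)] .
    have wi: "isix w" using cont_isix[OF 2(1)] .
    have inF2: "inT (l'+b) (?F2 ?y)" using arr_inT[OF F2] y by auto
    have IH: "unsh l (res l ?F1 (pk (?F2 ?y))) = unsh l' (res l' ?F2 (?F2 ?y))" using 2(3) inF2 by blast
    have R: "unsh l' (res l' ?F2 w) = seqv w (unsh l' (res l' ?F2 (?F2 ?y)))"
      unfolding res_cont[OF 2(1)] unsh_seqv[OF wi] ..
    have pkw: "pk w = seqv w (k ?y)" unfolding pk_def using K1l[OF y] by simp
    show ?case
    proof (cases "isix (k ?y)")
      case False
      have "pk w = k ?y" "?F2 ?y = k ?y" unfolding pkw F2l[OF y] using False wi by (cases "k ?y"; cases w; auto)+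
      then show ?thesis unfolding R using False res_nc[of l "k ?y"] res_nc[of l' "k ?y"] wi
        by (cases "k ?y"; cases w) auto
    next
      case True
      let ?x = "idx (k ?y)"
      have x: "?x \<in> {1..l}" using arr_idx[OF k y True] .
      have cpk: "cont l (pk w)" unfolding pkw using cont_seqv[OF wi] isix_idx_cont[OF True x] by simp
      have "res l ?F1 (pk w) = seqv (pk w) (res l ?F1 (?F1 ?x))"
        using res_cont[OF cpk] idx_seqv[OF wi] pkw by simp
      also have "\<dots> = seqv w (seqv (k ?y) (res l ?F1 (pk (f ?x))))"
        using F1e[of ?x] x pkw seqv_assoc by simp
      also have "\<dots> = seqv w (res l ?F1 (pk (?F2 ?y)))"
        unfolding F2l[OF y] pk_seqv[OF True] res_prefix[OF True] ..
      finally have X: "res l ?F1 (pk w) = seqv w (res l ?F1 (pk (?F2 ?y)))" .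
      show ?thesis unfolding R X unsh_seqv[OF wi] IH ..
    qed
  next
    case (3 w)
    let ?q = "path ?F2 w"
    have cq: "\<And>t. cont l' (?q t)" using nstops[OF 3(1)] .
    define \<kappa> where "\<kappa> t = k (idx (?q t))" for t
    define \<phi> where "\<phi> t = (if t = 0 then w else f (idx (\<kappa> (t - 1))))" for t
    have qS: "?q (Suc t) = seqv (\<kappa> t) (\<phi> (Suc t))" for t
      unfolding \<kappa>_def \<phi>_def using F2l cont_idx[OF cq] by simp
    have ki: "isix (\<kappa> t)" for t
      using qS[of t] cont_isix[OF cq[of "Suc t"]] seqv_isix by metis
    have kl: "idx (\<kappa> t) \<in> {1..l}" for t
      unfolding \<kappa>_def using arr_idx[OF k] cont_idx[OF cq] ki[of t] unfolding \<kappa>_def by blast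
    have idxphi: "idx (\<phi> t) = idx (?q t)" for t
    proof (cases t)
      case (Suc t') then show ?thesis using qS[of t'] idx_seqv[OF ki] by simp
    qed (simp add: \<phi>_def)
    have phii: "isix (\<phi> t)" for t
    proof (cases t)
      case 0 then show ?thesis using cont_isix[OF cq[of 0]] by (simp add: \<phi>_def)
    next
      case (Suc t') then show ?thesis using qS[of t'] cont_isix[OF cq[of t]] isix_seqv[OF ki] by simp
    qed
    have p1: "path ?F1 (pk w) t = seqv (\<phi> t) (\<kappa> t)" for t
    proof (induction t)
      case 0 then show ?case unfolding pk_def \<phi>_def \<kappa>_def using K1l cont_idx[OF cq[of 0]] by simp
    next
      case (Suc t)
      have "idx (seqv (\<phi> t) (\<kappa> t)) = idx (\<kappa> t)" using idx_seqv[OF phii] .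
      hence "path ?F1 (pk w) (Suc t) = ?F1 (idx (\<kappa> t))" using Suc by simp
      also have "\<dots> = pk (\<phi> (Suc t))" using F1e[of "idx (\<kappa> t)"] kl[of t] by (simp add: \<phi>_def)
      also have "\<dots> = seqv (\<phi> (Suc t)) (\<kappa> (Suc t))"
      proof -
        have "idx (?q (Suc t)) \<in> {1..l'}" using cont_idx[OF cq] by blast
        from K1l[OF this] show ?thesis unfolding pk_def \<kappa>_def idxphi by (simp del: path.simps)
      qed
      finally show ?case .
    qed
    have c1: "cont l (path ?F1 (pk w) t)" for t
      unfolding p1 cont_seqv[OF phii] using isix_idx_cont[OF ki kl] .
    have ns1: "\<not> stops l ?F1 (pk w)" unfolding stops_def using c1 by blast
    have tele: "PS ?F2 w (Suc J) = PS ?F1 (pk w) J + wt (\<phi> J)" for J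
    proof (induction J)
      case 0 then show ?case by (simp add: PS_def \<phi>_def)
    next
      case (Suc J)
      have "PS ?F2 w (Suc (Suc J)) = PS ?F2 w (Suc J) + wt (?q (Suc J))" unfolding PS_def by simp
      also have "wt (?q (Suc J)) = wt (\<kappa> J) + wt (\<phi> (Suc J))" unfolding qS using wt_seqv[OF ki phii] .
      also have "PS ?F1 (pk w) (Suc J) = PS ?F1 (pk w) J + wt (\<phi> J) + wt (\<kappa> J)"
        unfolding PS_def using p1 wt_seqv[OF phii ki] by simp
      ultimately show ?case using Suc by simp
    qed
    define M where "M = max \<bar>wt w\<bar> (Max ((\<lambda>x. \<bar>wt (f x)\<bar>) ` {1..l}))"
    have Mb: "\<bar>wt (\<phi> J)\<bar> \<le> M" for J
    proof (cases J)
      case 0 then show ?thesis unfolding M_def \<phi>_def by simp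
    next
      case (Suc J')
      have "\<bar>wt (f (idx (\<kappa> J')))\<bar> \<le> Max ((\<lambda>x. \<bar>wt (f x)\<bar>) ` {1..l})"
        using kl[of J'] by (intro Max_ge) auto
      then show ?thesis unfolding M_def \<phi>_def using Suc by simp
    qed
    have nbeq: "nb ?F1 (pk w) = nb ?F2 w"
      unfolding nb_def by (rule nb_pert[where M = M]) (use tele Mb in simp_all)
    show ?case
      unfolding res_nstops[OF 3(1)] res_nstops[OF ns1] nbeq by simp
  qed
  show ?thesis
  proof (rule extensionalityI[OF tr_ext tr_ext])
    fix i assume i: "i \<in> {1..a}"
    have li: "l + i \<in> {1..l+a}" "l' + i \<in> {1..l'+a}" using i by auto
    have e2: "?F2 (l'+i) = f (l+i)"
    proof -
      have "?K2 (l'+i) = Idx (l+i)" using tensor_app[OF li(2)] ident_app[OF i] i by simp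
      thus ?thesis unfolding comp_app[OF li(2)] by simp
    qed
    have w: "inT (l'+b) (f (l+i))" using arr_inT[OF f li(1)] .
    show "tr l a b ?F1 i = tr l' a b ?F2 i"
      unfolding tr_app[OF F1 i] tr_app[OF F2 i] F1e[OF li(1)] e2 using S[OF w] .
  qed
qed

lemma path_add: "path F x (m + j) = path F (path F x m) j"
  by (induction j) auto

lemma cont_mono: "cont l v \<Longrightarrow> cont (l + l') v" by (cases v) auto

lemma res_nstops_mono:
  assumes ns: "\<not> stops l f w"
  shows "res (l + l') f w = res l f w"
proof -
  have c: "\<And>t. cont (l+l') (path f w t)" using nstops[OF ns] cont_mono by blast
  hence ns2: "\<not> stops (l+l') f w" unfolding stops_def by blast
  show ?thesis using res_nstops[OF ns] res_nstops[OF ns2] by simp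
qed

lemma res_stops_mono:
  "stops l f w \<longrightarrow> res (l + l') f w = res (l + l') f (res l f w)"
proof (induction w rule: res_induct[where l = l and F = f])
  case (1 w) then show ?case using res_nc by simp
next
  case (2 w)
  have wi: "isix w" using cont_isix[OF 2(1)] .
  have "res (l+l') f w = seqv w (res (l+l') f (f (idx w)))" using res_cont[OF cont_mono[OF 2(1)]] .
  also have "\<dots> = seqv w (res (l+l') f (res l f (f (idx w))))" using 2(2,3) stops_Suc[OF 2(1)] by simp
  also have "\<dots> = res (l+l') f (seqv w (res l f (f (idx w))))" using res_prefix[OF wi] by simp
  also have "\<dots> = res (l+l') f (res l f w)" using res_cont[OF 2(1)] by simp
  finally show ?case by simp
next
  case (3 w) then show ?case by simp
qed

lemma wt_fv: "(\<forall>j<K. isix (p j)) \<Longrightarrow> isix (p K) \<Longrightarrow> wt (fv p K) = (\<Sum>j\<le>K. wt (p j))"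
proof -
  assume a: "\<forall>j<K. isix (p j)" and b: "isix (p K)"
  show ?thesis
  proof (cases "p K")
    case (Idx q)
    show ?thesis
    proof (cases "\<forall>j<K. \<exists>q. p j = Idx q")
      case True
      have "(\<Sum>j\<le>K. wt (p j)) = 0"
      proof (rule sum.neutral, rule ballI)
        fix j assume "j \<in> {..K}"
        show "wt (p j) = 0"
        proof (cases "j = K")
          case False
          hence "j < K" using \<open>j \<in> {..K}\<close> by simp
          then obtain q' where "p j = Idx q'" using True by blast
          thus ?thesis by simp
        qed (use Idx in simp)
      qed
      then show ?thesis unfolding fv_formula[OF a] using Idx True by simp
    next
      case False
      then show ?thesis unfolding fv_formula[OF a] using Idx by auto
    qed
  next
    case (Wt r q)
    then show ?thesis unfolding fv_formula[OF a] by simp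
  qed (use b in auto)
qed

primrec blk :: "nat \<Rightarrow> (nat \<Rightarrow> tval) \<Rightarrow> (nat \<Rightarrow> tval) \<Rightarrow> nat \<Rightarrow> nat" where
  "blk l f p 0 = 0"
| "blk l f p (Suc J) = blk l f p J + Suc (st l f (p (Suc (blk l f p J))))"

lemma blk_ge: "blk l f p J \<ge> J"
  by (induction J) auto

lemma sum_split: "(\<Sum>t<m + n. (w::nat \<Rightarrow> real) t) = (\<Sum>t<m. w t) + (\<Sum>j<n. w (m + j))"
  by (induction n) auto

lemma unsh_isix[simp]: "isix (unsh l v) = isix v" by (cases v) auto
lemma unsh_wt[simp]: "wt (unsh l v) = wt v" by (cases v) auto
lemma unsh_idx: "isix v \<Longrightarrow> idx (unsh l v) = idx v - l" by (cases v) auto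
lemma ncont_isix_gt: "inT N v \<Longrightarrow> isix v \<Longrightarrow> \<not> cont l v \<Longrightarrow> idx v > l" by (cases v) auto

lemma fv_isix_end: "(\<forall>j<K. isix (p j)) \<Longrightarrow> isix (fv p K) \<Longrightarrow> isix (p K) \<and> idx (fv p K) = idx (p K)"
  by (subst (asm) fv_formula, assumption, subst fv_formula, assumption) (cases "p K"; auto)

lemma W_inf:
  assumes f: "arr (l+(l'+a)) (l+(l'+b)) f"
    and z: "inT (l+(l'+b)) z" "\<not> cont l z"
    and ns: "\<not> stops l' (tr l (l'+a) (l'+b) f) (unsh l z)"
  shows "unsh l (res (l+l') f z) = res l' (tr l (l'+a) (l'+b) f) (unsh l z)"
proof -
  let ?g = "tr l (l'+a) (l'+b) f"
  let ?N = "l+(l'+b)"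
  let ?p = "path f z"
  let ?y = "path ?g (unsh l z)"
  let ?\<beta> = "blk l f ?p"
  have cy: "\<And>J. cont l' (?y J)" using nstops[OF ns] .
  have geq: "?g x = unsh l (res l f (f (l + x)))" if "x \<in> {1..l'+a}" for x
    using tr_app[OF f that] .
  have dom: "\<forall>x\<in>{1..l}. inT ?N (f x)" using arr_inT[OF f] by auto
  have Inv: "idx (?p (?\<beta> J)) = l + idx (?y J) \<and> PS ?g (unsh l z) (Suc J) = PS f z (Suc (?\<beta> J))
             \<and> (\<forall>t\<le>?\<beta> J. cont (l+l') (?p t))" for J
  proof (induction J)
    case 0
    have zi: "isix z" using cont_isix[OF cy[of 0]] by simp
    have gt: "idx z > l" using ncont_isix_gt[OF z(1) zi z(2)] .
    have e: "idx z = l + idx (unsh l z)" using gt unsh_idx[OF zi] by simp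
    have "idx (unsh l z) \<in> {1..l'}" using cont_idx[OF cy[of 0]] by simp
    hence "cont (l+l') z" using e zi isix_idx_cont[of z "l+l'"] by simp
    then show ?case using e by (simp add: PS_def)
  next
    case (Suc J)
    have e: "idx (?p (?\<beta> J)) = l + idx (?y J)" and ps: "PS ?g (unsh l z) (Suc J) = PS f z (Suc (?\<beta> J))"
      and cc: "\<forall>t\<le>?\<beta> J. cont (l+l') (?p t)" using Suc by auto
    have yJ: "idx (?y J) \<in> {1..l'}" using cont_idx[OF cy] .
    hence yJ2: "idx (?y J) \<in> {1..l'+a}" by simp
    define u where "u = ?p (Suc (?\<beta> J))"
    have u: "u = f (l + idx (?y J))" unfolding u_def using e by simp
    have ySJ: "?y (Suc J) = unsh l (res l f u)" using geq[OF yJ2] u by simp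
    have ri: "isix (res l f u)" using cont_isix[OF cy[of "Suc J"]] ySJ by simp
    have su: "stops l f u" using res_isix_stops[OF ri] .
    define K where "K = st l f u"
    have pu: "path f u j = ?p (Suc (?\<beta> J) + j)" for j unfolding u_def path_add ..
    have rfv: "res l f u = fv (path f u) K" unfolding res_def K_def using su by simp
    have cK: "\<forall>j<K. cont l (path f u j)" unfolding K_def using stops_st_less by blast
    have iK: "\<forall>j<K. isix (path f u j)" using cK cont_isix by blast
    have endK: "isix (path f u K)" "idx (res l f u) = idx (path f u K)"
      using fv_isix_end[OF iK] ri unfolding rfv by auto
    have uin: "inT ?N u" using u arr_inT[OF f] yJ by auto
    have rin: "inT ?N (res l f u)" using res_inT[OF dom uin] .
    have gtl: "idx (res l f u) > l" using ncont_isix_gt[OF rin ri res_ncont] .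
    have ySJi: "idx (?y (Suc J)) = idx (res l f u) - l" using ySJ unsh_idx[OF ri] by simp
    have bS: "?\<beta> (Suc J) = Suc (?\<beta> J) + K" unfolding K_def u_def by simp
    have e': "idx (?p (?\<beta> (Suc J))) = l + idx (?y (Suc J))"
      using endK(2) ySJi gtl bS pu[of K] by simp
    have wy: "wt (?y (Suc J)) = (\<Sum>j\<le>K. wt (?p (Suc (?\<beta> J) + j)))"
    proof -
      have "wt (?y (Suc J)) = wt (fv (path f u) K)" using ySJ rfv by simp
      also have "\<dots> = (\<Sum>j\<le>K. wt (path f u j))" by (rule wt_fv[OF iK endK(1)])
      also have "\<dots> = (\<Sum>j\<le>K. wt (?p (Suc (?\<beta> J) + j)))" unfolding pu ..
      finally show ?thesis .
    qed
    have ps': "PS ?g (unsh l z) (Suc (Suc J)) = PS f z (Suc (?\<beta> (Suc J)))"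
    proof -
      have "PS ?g (unsh l z) (Suc (Suc J)) = PS ?g (unsh l z) (Suc J) + wt (?y (Suc J))"
        unfolding PS_def by simp
      also have "\<dots> = PS f z (Suc (?\<beta> J)) + (\<Sum>j<Suc K. wt (?p (Suc (?\<beta> J) + j)))"
        using ps wy lessThan_Suc_atMost by simp
      also have "\<dots> = PS f z (Suc (?\<beta> J) + Suc K)" unfolding PS_def by (rule sum_split[symmetric])
      finally show ?thesis using bS by simp
    qed
    have cc': "\<forall>t\<le>?\<beta> (Suc J). cont (l+l') (?p t)"
    proof (intro allI impI)
      fix t assume t: "t \<le> ?\<beta> (Suc J)"
      show "cont (l+l') (?p t)"
      proof (cases "t \<le> ?\<beta> J")
        case True then show ?thesis using cc by simp
      next
        case False
        then obtain j where j: "t = Suc (?\<beta> J) + j" "j \<le> K" using t bS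
          by (metis add_Suc le_add_diff_inverse not_less_eq_eq add_le_cancel_left)
        show ?thesis
        proof (cases "j < K")
          case True then show ?thesis using cK pu j cont_mono by metis
        next
          case False
          hence "j = K" using j by simp
          hence "idx (?p t) = l + idx (?y (Suc J))" using e' j bS by simp
          moreover have "idx (?y (Suc J)) \<in> {1..l'}" using cont_idx[OF cy] .
          moreover have "isix (?p t)" using endK(1) pu j \<open>j = K\<close> by simp
          ultimately show ?thesis using isix_idx_cont[of "?p t" "l+l'"] by simp
        qed
      qed
    qed
    show ?case using e' ps' cc' by blast
  qed
  have allc: "\<And>t. cont (l+l') (?p t)" using Inv blk_ge by blast
  have ns2: "\<not> stops (l+l') f z" unfolding stops_def using allc by blast
  have nbeq: "nb f z = nb ?g (unsh l z)"
  proof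
    assume "nb f z"
    then obtain B where B: "\<And>N. B \<le> PS f z N" unfolding nb_def by blast
    have "min 0 B \<le> PS ?g (unsh l z) N" for N
    proof (cases N)
      case (Suc J) then show ?thesis using Inv[of J] B[of "Suc (?\<beta> J)"] by (simp add: min_le_iff_disj)
    qed simp
    thus "nb ?g (unsh l z)" unfolding nb_def by blast
  next
    assume "nb ?g (unsh l z)"
    then obtain B where B: "\<And>N. B \<le> PS ?g (unsh l z) N" unfolding nb_def by blast
    obtain s P where P: "P > 0" and per: "\<forall>j\<ge>s. ?p (j + P) = ?p j"
      using path_periodic[of "l+l'" f z] allc by blast
    have perw: "\<forall>j\<ge>s. wt (?p (j + P)) = wt (?p j)" using per by simp
    define \<gamma> where "\<gamma> J = (case J of 0 \<Rightarrow> 0 | Suc J' \<Rightarrow> Suc (?\<beta> J'))" for J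
    have gge: "\<forall>J. \<gamma> J \<ge> J" unfolding \<gamma>_def using blk_ge by (auto split: nat.split)
    have gb: "\<forall>J. B \<le> (\<Sum>j<\<gamma> J. wt (?p j))"
    proof
      fix J show "B \<le> (\<Sum>j<\<gamma> J. wt (?p j))"
      proof (cases J)
        case 0 then show ?thesis using B[of 0] by (simp add: \<gamma>_def)
      next
        case (Suc J') then show ?thesis using B[of J] Inv[of J'] by (simp add: \<gamma>_def PS_def)
      qed
    qed
    show "nb f z" using periodic_nb[OF P perw gge gb] unfolding nb_def PS_def by blast
  qed
  show ?thesis using res_nstops[OF ns] res_nstops[OF ns2] nbeq by simp
qed

lemma W_all:
  assumes f: "arr (l+(l'+a)) (l+(l'+b)) f"
  shows "inT (l+(l'+b)) z \<Longrightarrow> \<not> cont l z \<Longrightarrow>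
         unsh l (res (l+l') f z) = res l' (tr l (l'+a) (l'+b) f) (unsh l z)"
proof -
  let ?g = "tr l (l'+a) (l'+b) f"
  let ?N = "l+(l'+b)"
  have dom: "\<forall>x\<in>{1..l}. inT ?N (f x)" using arr_inT[OF f] by auto
  have geq: "?g x = unsh l (res l f (f (l + x)))" if "x \<in> {1..l'+a}" for x
    using tr_app[OF f that] .
  have main: "\<forall>z. stops l' ?g (unsh l z) \<longrightarrow> st l' ?g (unsh l z) = n \<longrightarrow> inT ?N z \<longrightarrow> \<not> cont l z \<longrightarrow>
         unsh l (res (l+l') f z) = res l' ?g (unsh l z)" for n
  proof (induction n rule: less_induct)
    case (less n)
    show ?case
    proof (intro allI impI)
      fix z assume sz: "stops l' ?g (unsh l z)" and n: "st l' ?g (unsh l z) = n"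
        and zin: "inT ?N z" and zc: "\<not> cont l z"
      show "unsh l (res (l+l') f z) = res l' ?g (unsh l z)"
      proof (cases "isix z")
        case False
        then show ?thesis using res_nc[of "l+l'" z f] res_nc[of l' z ?g] by (cases z) auto
      next
        case True
        have gt: "idx z > l" using ncont_isix_gt[OF zin True zc] .
        let ?y = "unsh l z"
        have yi: "idx ?y = idx z - l" using unsh_idx[OF True] .
        show ?thesis
        proof (cases "idx z \<le> l + l'")
          case False
          have c1: "\<not> cont (l+l') z" using False by (cases z) auto
          have c2: "\<not> cont l' ?y" using False True yi by (cases z) auto
          show ?thesis using res_nc[OF c1] res_nc[OF c2] by simp
        next
          case True2: True
          have cz: "cont (l+l') z" using True2 gt True isix_idx_cont[of z "l+l'"] by simp
          have y: "idx ?y \<in> {1..l'}" using yi gt True2 by auto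
          have cy: "cont l' ?y" using isix_idx_cont[OF unsh_isix[THEN iffD2, OF True] y] .
          have y2: "idx ?y \<in> {1..l'+a}" using y by simp
          have lz: "l + idx ?y = idx z" using yi gt by simp
          let ?w = "f (idx z)"
          have win: "inT ?N ?w" using arr_inT[OF f] y lz by auto
          have gy: "?g (idx ?y) = unsh l (res l f ?w)" using geq[OF y2] lz by simp
          have sy: "stops l' ?g (?g (idx ?y))" using stops_Suc[OF cy] sz by simp
          have lt: "st l' ?g (?g (idx ?y)) < n" using st_Suc[OF cy sz] n by simp
          have V: "unsh l (res (l+l') f ?w) = res l' ?g (unsh l (res l f ?w))"
          proof (cases "stops l f ?w")
            case False
            then show ?thesis using res_nstops_mono[OF False, of l'] res_nstops[OF False]
              by (simp add: res_nc)
          next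
            case True
            let ?z' = "res l f ?w"
            have e: "res (l+l') f ?w = res (l+l') f ?z'" using res_stops_mono True by blast
            have "unsh l (res (l+l') f ?z') = res l' ?g (unsh l ?z')"
              using less.IH[OF lt] sy gy res_inT[OF dom win] res_ncont by auto
            then show ?thesis using e by simp
          qed
          have L: "unsh l (res (l+l') f z) = seqv z (unsh l (res (l+l') f ?w))"
            using res_cont[OF cz] unsh_seqv[OF True] by simp
          have R: "res l' ?g ?y = seqv z (res l' ?g (?g (idx ?y)))"
            using res_cont[OF cy] seqv_unsh by simp
          show ?thesis unfolding L R V gy ..
        qed
      qed
    qed
  qed
  assume zin: "inT ?N z" and zc: "\<not> cont l z"
  show "unsh l (res (l+l') f z) = res l' ?g (unsh l z)"
  proof (cases "stops l' ?g (unsh l z)")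
    case True then show ?thesis using main zin zc by blast
  next
    case False then show ?thesis using W_inf[OF f zin zc] by blast
  qed
qed

lemma trace_vanish:
  assumes f0: "arr (l+l'+a) (l+l'+b) f"
  shows "tr (l+l') a b f = tr l' a b (tr l (l'+a) (l'+b) f)"
proof -
  have f: "arr (l+(l'+a)) (l+(l'+b)) f" using f0 by (simp add: add.assoc)
  let ?g = "tr l (l'+a) (l'+b) f"
  let ?N = "l+(l'+b)"
  have g: "arr (l'+a) (l'+b) ?g" using arr_tr[OF f] .
  have dom: "\<forall>x\<in>{1..l}. inT ?N (f x)" using arr_inT[OF f] by auto
  have f1: "arr ((l+l')+a) ((l+l')+b) f" using f0 .
  show ?thesis
  proof (rule extensionalityI[OF tr_ext tr_ext])
    fix i assume i: "i \<in> {1..a}"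
    have li: "l' + i \<in> {1..l'+a}" using i by auto
    let ?w = "f (l + (l' + i))"
    have win: "inT ?N ?w" using arr_inT[OF f] i by auto
    have gi: "?g (l'+i) = unsh l (res l f ?w)" using tr_app[OF f li] .
    have V: "unsh l (res (l+l') f ?w) = res l' ?g (unsh l (res l f ?w))"
    proof (cases "stops l f ?w")
      case False
      then show ?thesis using res_nstops_mono[OF False, of l'] res_nstops[OF False]
        by (simp add: res_nc)
    next
      case True
      have e: "res (l+l') f ?w = res (l+l') f (res l f ?w)" using res_stops_mono True by blast
      show ?thesis unfolding e using W_all[OF f res_inT[OF dom win] res_ncont] .
    qed
    have "tr (l+l') a b f i = unsh l' (unsh l (res (l+l') f ?w))"
      using tr_app[OF f1 i] unsh_add by (simp add: add.assoc)
    also have "\<dots> = tr l' a b ?g i" unfolding V tr_app[OF g i] gi ..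
    finally show "tr (l+l') a b f i = tr l' a b ?g i" .
  qed
qed

theorem propositionD2:
  shows "is_traced_symmetric_monoidal arr comp ident tensor sym tr"
  unfolding is_traced_symmetric_monoidal_def
  using symmetric_monoidal arr_tr trace_tighten trace_slide trace_vanish0 trace_vanish
    trace_superpose trace_yank
  by simp

end
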